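(* Let $n\ge 3$, let $m_1,m_2$ be positive integers with $m_1\mid m_2$, and let $F,R$ be as in the context. Consider the following list of elements of $F$, each with an attached number $N$: $[s_i(1),s_i(x)]$ ($1\le i\le n-1$), $N=m_1$; for $1\le i<j-1\le n-2$: $[s_i(1),s_j(1)]$, $N=m_2$; $[s_i(x),s_j(x)][s_i(1),s_j(1)]^{-1}$, $[s_i(x),s_j(1)][s_i(x),s_j(x)]^{-1}$, $[s_i(1),s_j(x)][s_i(x),s_j(x)]^{-1}$, each $N=m_1$; for $1\le i\le n-2$: $[s_i(1),s_{i+1}(x)][s_i(x),s_{i+1}(1)]^{-1}$ and $[s_i(x),s_{i+1}(x)][s_i(x),s_{i+1}(1)]^{-1}$, each $N=m_1$; $[s_i(1),s_{i+1}(1),s_i(1)]$, $N=m_2$; $[s_i(1),s_{i+1}(1),s_{i+1}(1)s_i(1)^{-1}]$, $N=\gcd(m_2,\binom{m_2}{2})$; $[s_i(1),s_{i+1}(1),s_i(x)s_i(1)^{-1}]$, $N=m_1$; $[s_i(1),s_{i+1}(1),s_i(x)s_{i+1}(x)^{-1}(s_i(1)s_{i+1}(1)^{-1})^{-1}]$, $N=\gcd(m_1,\binom{m_1}{2})$; for $1\le i\le n-3$: $[s_i(1),s_{i+1}(1),s_{i+2}(1),s_{i+1}(1)]$, $N=\gcd(2,m_2)$; $[s_i(1),s_{i+1}(1),s_{i+2}(1),s_{i+1}(x)s_{i+1}(1)^{-1}]$, $N=\gcd(2,m_1)$. If a product (in any order) of integer powers of these elements, each element occurring once, lies in $[R,F]$,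 then the exponent of each element is divisible by its attached number $N$.
   Context: Commutator conventions: $[a,b]=a^{-1}b^{-1}ab$, commutators left-normed: $[a_1,\dots,a_k]=[[a_1,\dots,a_{k-1}],a_k]$. Let $F$ be the free group on the $2(n-1)$ symbols $s_i(1),s_i(x)$, $1\le i\le n-1$. Write $s_i(1|x)$ for either of $s_i(1),s_i(x)$ (every choice is included). Let $R$ be the normal closure in $F$ of: $s_i(1)^{m_1}s_i(x)^{-m_1}$ and $s_i(x)^{m_2}$ ($1\le i\le n-1$); $[s_i(1),s_i(x)]$ ($1\le i\le n-1$); $[s_i(1|x),s_j(1|x)]$ ($1\le i<j-1\le n-2$); $[s_i(1|x)^{-1},s_{i+1}(x)^{-1}][s_i(x),s_{i+1}(1)]^{-1}$ ($1\le i\le n-2$); $[s_i(1|x),s_{i+1}(1),s_i(1)]$ and $[s_i(1|x),s_{i+1}(1),s_{i+1}(1)]$ ($1\le i\le n-2$); $[[s_i(1|x),s_{i+1}(1)],[s_{i+1}(1|x),s_{i+2}(1)]]$ ($1\le i\le n-3$). It is known that $F/R\cong\mathrm{UT}_n(\mathbb Z/m_1\mathbb Z\times\mathbb Z/m_2\mathbb Z)$ via $s_i(\lambda)\mapsto I+\lambda E_{i,i+1}$, where $1=(1,1)$ and $x=(0,1)$. *)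

theory Defs
  imports "HOL-Algebra.Algebra"
begin

text \<open>A letter is a pair (inverted?, generator). A word is a list of letters.\<close>

type_synonym 'a letter = "bool \<times> 'a"

definition inv_letter :: "'a letter \<Rightarrow> 'a letter" where
  "inv_letter l = (\<not> fst l, snd l)"

fun cons_red :: "'a letter \<Rightarrow> 'a letter list \<Rightarrow> 'a letter list" where
  "cons_red a [] = [a]"
| "cons_red a (b # ys) = (if b = inv_letter a then ys else a # b # ys)"

definition reduce :: "'a letter list \<Rightarrow> 'a letter list" where
  "reduce xs = foldr cons_red xs []"

fun reduced :: "'a letter list \<Rightarrow> bool" where
  "reduced [] = True"
| "reduced [a] = True"
| "reduced (a # b # ys) = (b \<noteq> inv_letter a \<and> reduced (b # ys))"

definition free_grp :: "'a set \<Rightarrow> 'a letter list monoid" where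
  "free_grp S = \<lparr> carrier = {w. reduced w \<and> snd ` set w \<subseteq> S},
                  monoid.mult = (\<lambda>u v. reduce (u @ v)),
                  one = [] \<rparr>"

definition gen_word :: "'a \<Rightarrow> 'a letter list" where
  "gen_word a = [(False, a)]"

text \<open>Convention: [a,b] = a^-1 b^-1 a b.\<close>

definition comm :: "('g, 'b) monoid_scheme \<Rightarrow> 'g \<Rightarrow> 'g \<Rightarrow> 'g" where
  "comm G a b = inv\<^bsub>G\<^esub> a \<otimes>\<^bsub>G\<^esub> inv\<^bsub>G\<^esub> b \<otimes>\<^bsub>G\<^esub> a \<otimes>\<^bsub>G\<^esub> b"

definition comm3 :: "('g, 'b) monoid_scheme \<Rightarrow> 'g \<Rightarrow> 'g \<Rightarrow> 'g \<Rightarrow> 'g" where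
  "comm3 G a b c = comm G (comm G a b) c"

definition comm4 :: "('g, 'b) monoid_scheme \<Rightarrow> 'g \<Rightarrow> 'g \<Rightarrow> 'g \<Rightarrow> 'g \<Rightarrow> 'g" where
  "comm4 G a b c d = comm G (comm3 G a b c) d"

definition normal_closure :: "('g, 'b) monoid_scheme \<Rightarrow> 'g set \<Rightarrow> 'g set" where
  "normal_closure G A = generate G {g \<otimes>\<^bsub>G\<^esub> a \<otimes>\<^bsub>G\<^esub> inv\<^bsub>G\<^esub> g | g a. g \<in> carrier G \<and> a \<in> A}"

definition comm_subgroup :: "('g, 'b) monoid_scheme \<Rightarrow> 'g set \<Rightarrow> 'g set \<Rightarrow> 'g set" where
  "comm_subgroup G A B = generate G {comm G a b | a b. a \<in> A \<and> b \<in> B}"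

definition list_prod :: "('g, 'b) monoid_scheme \<Rightarrow> 'g list \<Rightarrow> 'g" where
  "list_prod G xs = foldr (\<lambda>a b. a \<otimes>\<^bsub>G\<^esub> b) xs \<one>\<^bsub>G\<^esub>"

text \<open>Generators: (i, False) stands for s_i(1), (i, True) for s_i(x), 1 <= i <= n-1.\<close>

definition UT_gens :: "nat \<Rightarrow> (nat \<times> bool) set" where
  "UT_gens n = {(i, b). 1 \<le> i \<and> i \<le> n - 1}"

definition FF :: "nat \<Rightarrow> (nat \<times> bool) letter list monoid" where
  "FF n = free_grp (UT_gens n)"

definition s1 :: "nat \<Rightarrow> (nat \<times> bool) letter list" where "s1 i = gen_word (i, False)"
definition sx :: "nat \<Rightarrow> (nat \<times> bool) letter list" where "sx i = gen_word (i, True)"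
definition sb :: "nat \<Rightarrow> bool \<Rightarrow> (nat \<times> bool) letter list" where "sb i b = gen_word (i, b)"

definition UT_rels :: "nat \<Rightarrow> nat \<Rightarrow> nat \<Rightarrow> (nat \<times> bool) letter list set" where
  "UT_rels n m1 m2 = (let G = FF n in
      {s1 i [^]\<^bsub>G\<^esub> m1 \<otimes>\<^bsub>G\<^esub> inv\<^bsub>G\<^esub> (sx i [^]\<^bsub>G\<^esub> m1) | i. 1 \<le> i \<and> i \<le> n - 1}
    \<union> {sx i [^]\<^bsub>G\<^esub> m2 | i. 1 \<le> i \<and> i \<le> n - 1}
    \<union> {comm G (s1 i) (sx i) | i. 1 \<le> i \<and> i \<le> n - 1}
    \<union> {comm G (sb i a) (sb j b) | i j a b. 1 \<le> i \<and> i + 1 < j \<and> j \<le> n - 1}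
    \<union> {comm G (inv\<^bsub>G\<^esub> (sb i a)) (inv\<^bsub>G\<^esub> (sx (i+1))) \<otimes>\<^bsub>G\<^esub> inv\<^bsub>G\<^esub> (comm G (sx i) (s1 (i+1)))
         | i a. 1 \<le> i \<and> i \<le> n - 2}
    \<union> {comm3 G (sb i a) (s1 (i+1)) (s1 i) | i a. 1 \<le> i \<and> i \<le> n - 2}
    \<union> {comm3 G (sb i a) (s1 (i+1)) (s1 (i+1)) | i a. 1 \<le> i \<and> i \<le> n - 2}
    \<union> {comm G (comm G (sb i a) (s1 (i+1))) (comm G (sb (i+1) b) (s1 (i+2)))
         | i a b. 1 \<le> i \<and> i \<le> n - 3})"

definition RR :: "nat \<Rightarrow> nat \<Rightarrow> nat \<Rightarrow> (nat \<times> bool) letter list set" where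
  "RR n m1 m2 = normal_closure (FF n) (UT_rels n m1 m2)"

definition elem_list :: "nat \<Rightarrow> nat \<Rightarrow> nat \<Rightarrow> ((nat \<times> bool) letter list \<times> nat) list" where
  "elem_list n m1 m2 = (let G = FF n; c = comm G; c3 = comm3 G; c4 = comm4 G;
       iv = (\<lambda>a. inv\<^bsub>G\<^esub> a); mul = (\<lambda>a b. a \<otimes>\<^bsub>G\<^esub> b) in
     [(c (s1 i) (sx i), m1). i \<leftarrow> [1..<n]]
   @ concat [concat [
       [(c (s1 i) (s1 j), m2),
        (mul (c (sx i) (sx j)) (iv (c (s1 i) (s1 j))), m1),
        (mul (c (sx i) (s1 j)) (iv (c (sx i) (sx j))), m1),
        (mul (c (s1 i) (sx j)) (iv (c (sx i) (sx j))), m1)]. j \<leftarrow> [i+2..<n]]. i \<leftarrow> [1..<n]]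
   @ concat [
       [(mul (c (s1 i) (sx (i+1))) (iv (c (sx i) (s1 (i+1)))), m1),
        (mul (c (sx i) (sx (i+1))) (iv (c (sx i) (s1 (i+1)))), m1),
        (c3 (s1 i) (s1 (i+1)) (s1 i), m2),
        (c3 (s1 i) (s1 (i+1)) (mul (s1 (i+1)) (iv (s1 i))), gcd m2 (m2 choose 2)),
        (c3 (s1 i) (s1 (i+1)) (mul (sx i) (iv (s1 i))), m1),
        (c3 (s1 i) (s1 (i+1))
           (mul (mul (sx i) (iv (sx (i+1)))) (iv (mul (s1 i) (iv (s1 (i+1)))))),
         gcd m1 (m1 choose 2))]. i \<leftarrow> [1..<n-1]]
   @ concat [
       [(c4 (s1 i) (s1 (i+1)) (s1 (i+2)) (s1 (i+1)), gcd 2 m2),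
        (c4 (s1 i) (s1 (i+1)) (s1 (i+2)) (mul (sx (i+1)) (iv (s1 (i+1)))), gcd 2 m1)].
       i \<leftarrow> [1..<n-2]])"

end

theory Submission
  imports Defs
begin


lemma inv_letter_inv[simp]: "inv_letter (inv_letter a) = a"
  by (simp add: inv_letter_def)

lemma inv_letter_neq[simp]: "inv_letter a \<noteq> a"
  by (cases a) (simp add: inv_letter_def)

lemma reduced_tl: "reduced (a # ys) \<Longrightarrow> reduced ys"
  by (cases ys) auto

lemma reduced_cons_red: "reduced ys \<Longrightarrow> reduced (cons_red a ys)"
  by (cases ys) (auto dest: reduced_tl)

lemma reduced_reduce: "reduced (reduce xs)"
  by (induction xs) (auto simp: reduce_def reduced_cons_red)

lemma reduce_Cons: "reduce (a # xs) = cons_red a (reduce xs)"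
  by (simp add: reduce_def)

lemma reduce_Nil[simp]: "reduce [] = []"
  by (simp add: reduce_def)

lemma reduce_reduced: "reduced xs \<Longrightarrow> reduce xs = xs"
proof (induction xs)
  case Nil then show ?case by simp
next
  case (Cons a xs)
  then have "reduce xs = xs" using reduced_tl by blast
  then show ?case using Cons.prems by (cases xs) (auto simp: reduce_Cons)
qed

lemma foldr_reduce: "foldr cons_red xs (reduce ys) = reduce (xs @ ys)"
  by (simp add: reduce_def)

lemma cancel_red: "reduced w \<Longrightarrow> cons_red a (cons_red (inv_letter a) w) = w"
proof (cases w)
  case Nil then show ?thesis by simp
next
  case (Cons c w')
  assume r: "reduced w"
  show ?thesis
  proof (cases "c = a")
    case True
    then show ?thesis using Cons r by (cases w') auto
  next
    case False
    then show ?thesis using Cons by auto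
  qed
qed

lemma foldr_cons_red_reduced: "reduced zs \<Longrightarrow> reduced (foldr cons_red xs zs)"
  by (induction xs) (auto simp: reduced_cons_red)

lemma L2: "reduced r \<Longrightarrow> reduced zs \<Longrightarrow>
   foldr cons_red (cons_red a r) zs = cons_red a (foldr cons_red r zs)"
proof (cases r)
  case Nil then show ?thesis by simp
next
  case (Cons b r')
  assume rr: "reduced r" and rz: "reduced zs"
  show ?thesis
  proof (cases "b = inv_letter a")
    case True
    have "reduced (foldr cons_red r' zs)" using rz by (rule foldr_cons_red_reduced)
    then show ?thesis using Cons True by (simp add: cancel_red)
  next
    case False then show ?thesis using Cons by simp
  qed
qed

lemma L1: "reduced zs \<Longrightarrow> foldr cons_red (reduce xs) zs = foldr cons_red xs zs"
proof (induction xs)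
  case Nil then show ?case by simp
next
  case (Cons a xs)
  have "foldr cons_red (reduce (a # xs)) zs = foldr cons_red (cons_red a (reduce xs)) zs"
    by (simp add: reduce_Cons)
  also have "\<dots> = cons_red a (foldr cons_red (reduce xs) zs)"
    using Cons.prems by (simp add: L2 reduced_reduce)
  also have "\<dots> = foldr cons_red (a # xs) zs" using Cons by simp
  finally show ?case .
qed

lemma reduce_left: "reduce (reduce xs @ ys) = reduce (xs @ ys)"
proof -
  have "reduce (reduce xs @ ys) = foldr cons_red (reduce xs) (reduce ys)"
    by (simp add: foldr_reduce)
  also have "\<dots> = foldr cons_red xs (reduce ys)" by (simp add: L1 reduced_reduce)
  finally show ?thesis by (simp add: foldr_reduce)
qed

lemma reduce_right: "reduce (xs @ reduce ys) = reduce (xs @ ys)"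
  by (metis foldr_reduce reduce_reduced reduced_reduce)

lemma reduce_inv_cancel: "reduce (xs @ rev (map inv_letter xs) @ ys) = reduce ys"
proof (induction xs arbitrary: ys)
  case Nil then show ?case by simp
next
  case (Cons a xs)
  have "reduce ((a # xs) @ rev (map inv_letter (a # xs)) @ ys)
      = cons_red a (reduce (xs @ rev (map inv_letter xs) @ (inv_letter a # ys)))"
    by (simp add: reduce_Cons)
  also have "\<dots> = cons_red a (reduce (inv_letter a # ys))" using Cons by simp
  also have "\<dots> = reduce ys" by (simp add: reduce_Cons cancel_red reduced_reduce)
  finally show ?case .
qed

lemma set_cons_red: "set (cons_red a ys) \<subseteq> insert a (set ys)"
  by (cases ys) auto

lemma set_reduce: "set (reduce xs) \<subseteq> set xs"
proof (induction xs)
  case Nil then show ?case by simp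
next
  case (Cons a xs) then show ?case using set_cons_red[of a "reduce xs"]
    by (auto simp: reduce_Cons)
qed

lemma snd_inv_letter[simp]: "snd (inv_letter a) = snd a"
  by (simp add: inv_letter_def)

lemma fst_inv_letter[simp]: "fst (inv_letter a) = (\<not> fst a)"
  by (simp add: inv_letter_def)

lemma FF_carrier: "carrier (free_grp S) = {w. reduced w \<and> snd ` set w \<subseteq> S}"
  by (simp add: free_grp_def)
lemma FF_mult: "x \<otimes>\<^bsub>free_grp S\<^esub> y = reduce (x @ y)"
  by (simp add: free_grp_def)
lemma FF_one: "\<one>\<^bsub>free_grp S\<^esub> = []"
  by (simp add: free_grp_def)

lemma group_free_grp: "group (free_grp S)"
proof (rule groupI)
  fix x y assume "x \<in> carrier (free_grp S)" "y \<in> carrier (free_grp S)"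
  then show "x \<otimes>\<^bsub>free_grp S\<^esub> y \<in> carrier (free_grp S)"
    using set_reduce[of "x @ y"] by (force simp: FF_carrier FF_mult reduced_reduce)
next
  show "\<one>\<^bsub>free_grp S\<^esub> \<in> carrier (free_grp S)" by (simp add: FF_carrier FF_one)
next
  fix x y z
  show "x \<otimes>\<^bsub>free_grp S\<^esub> y \<otimes>\<^bsub>free_grp S\<^esub> z = x \<otimes>\<^bsub>free_grp S\<^esub> (y \<otimes>\<^bsub>free_grp S\<^esub> z)"
    by (simp add: FF_mult reduce_left reduce_right)
next
  fix x assume "x \<in> carrier (free_grp S)"
  then show "\<one>\<^bsub>free_grp S\<^esub> \<otimes>\<^bsub>free_grp S\<^esub> x = x"
    by (simp add: FF_carrier FF_mult FF_one reduce_reduced)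
next
  fix x assume x: "x \<in> carrier (free_grp S)"
  let ?y = "reduce (rev (map inv_letter x))"
  have "?y \<otimes>\<^bsub>free_grp S\<^esub> x = \<one>\<^bsub>free_grp S\<^esub>"
    using reduce_inv_cancel[of "rev (map inv_letter x)" "[]"]
    by (simp add: FF_mult FF_one reduce_left rev_map comp_def)
  moreover have "?y \<in> carrier (free_grp S)"
  proof -
    have "snd ` set ?y \<subseteq> snd ` set (rev (map inv_letter x))"
      by (rule image_mono[OF set_reduce])
    also have "\<dots> = snd ` set x" by (simp add: image_image)
    finally have "snd ` set ?y \<subseteq> snd ` set x" .
    then show ?thesis using x by (auto simp: FF_carrier reduced_reduce)
  qed
  ultimately show "\<exists>y\<in>carrier (free_grp S). y \<otimes>\<^bsub>free_grp S\<^esub> x = \<one>\<^bsub>free_grp S\<^esub>" by blast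
qed

definition lval :: "('g, 'b) monoid_scheme \<Rightarrow> ('a \<Rightarrow> 'g) \<Rightarrow> 'a letter \<Rightarrow> 'g" where
  "lval T g l = (if fst l then inv\<^bsub>T\<^esub> (g (snd l)) else g (snd l))"

definition evalw :: "('g, 'b) monoid_scheme \<Rightarrow> ('a \<Rightarrow> 'g) \<Rightarrow> 'a letter list \<Rightarrow> 'g" where
  "evalw T g w = foldr (\<lambda>l acc. lval T g l \<otimes>\<^bsub>T\<^esub> acc) w \<one>\<^bsub>T\<^esub>"

context group begin

lemma lval_closed: "g ` UNIV \<subseteq> carrier G \<Longrightarrow> lval G g l \<in> carrier G"
  by (auto simp: lval_def)

lemma lval_inv: "g ` UNIV \<subseteq> carrier G \<Longrightarrow> lval G g (inv_letter l) = inv (lval G g l)"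
  by (auto simp: lval_def inv_letter_def intro!: inv_inv[symmetric])

lemma evalw_closed: "g ` UNIV \<subseteq> carrier G \<Longrightarrow> evalw G g w \<in> carrier G"
  by (induction w) (auto simp: evalw_def lval_closed)

lemma evalw_Cons: "evalw G g (l # w) = lval G g l \<otimes> evalw G g w"
  by (simp add: evalw_def)

lemma evalw_Nil: "evalw G g [] = \<one>"
  by (simp add: evalw_def)

lemma evalw_append: "g ` UNIV \<subseteq> carrier G \<Longrightarrow> evalw G g (xs @ ys) = evalw G g xs \<otimes> evalw G g ys"
  by (induction xs) (auto simp: evalw_Cons evalw_Nil m_assoc evalw_closed lval_closed)

lemma evalw_cons_red: "g ` UNIV \<subseteq> carrier G \<Longrightarrow> evalw G g (cons_red a ys) = evalw G g (a # ys)"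
proof (cases ys)
  case Nil then show ?thesis by simp
next
  case (Cons b ys')
  assume gg: "g ` UNIV \<subseteq> carrier G"
  show ?thesis
  proof (cases "b = inv_letter a")
    case True
    have "evalw G g (a # ys) = lval G g a \<otimes> (inv (lval G g a) \<otimes> evalw G g ys')"
      using Cons True gg by (simp add: evalw_Cons lval_inv)
    also have "\<dots> = evalw G g ys'"
      using gg by (simp add: m_assoc[symmetric] lval_closed evalw_closed)
    finally show ?thesis using Cons True by simp
  next
    case False then show ?thesis using Cons by simp
  qed
qed

lemma evalw_reduce: "g ` UNIV \<subseteq> carrier G \<Longrightarrow> evalw G g (reduce xs) = evalw G g xs"
  by (induction xs) (auto simp: reduce_Cons evalw_cons_red evalw_Cons)

lemma evalw_hom: "g ` UNIV \<subseteq> carrier G \<Longrightarrow> evalw G g \<in> hom (free_grp S) G"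
  by (rule homI) (auto simp: FF_mult evalw_reduce evalw_append evalw_closed)

lemma evalw_group_hom: "g ` UNIV \<subseteq> carrier G \<Longrightarrow> group_hom (free_grp S) G (evalw G g)"
  by (simp add: group_hom_def group_hom_axioms_def group_free_grp evalw_hom is_group)

lemma evalw_gen: "g ` UNIV \<subseteq> carrier G \<Longrightarrow> evalw G g (gen_word a) = g a"
  by (auto simp: gen_word_def evalw_def lval_def intro!: r_one)

end


context group begin

lemma inv_cancel1[simp]: "x \<in> carrier G \<Longrightarrow> y \<in> carrier G \<Longrightarrow> x \<otimes> (inv x \<otimes> y) = y"
  by (simp add: m_assoc[symmetric])
lemma inv_cancel2[simp]: "x \<in> carrier G \<Longrightarrow> y \<in> carrier G \<Longrightarrow> inv x \<otimes> (x \<otimes> y) = y"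
  by (simp add: m_assoc[symmetric])

lemma comm_closed[simp]: "a \<in> carrier G \<Longrightarrow> b \<in> carrier G \<Longrightarrow> comm G a b \<in> carrier G"
  by (simp add: comm_def)

lemma comm_mult_right: "a \<in> carrier G \<Longrightarrow> b \<in> carrier G \<Longrightarrow> c \<in> carrier G \<Longrightarrow>
   comm G a (b \<otimes> c) = comm G a c \<otimes> (inv c \<otimes> comm G a b \<otimes> c)"
  by (simp add: comm_def m_assoc inv_mult_group)

lemma comm_inv_right: "a \<in> carrier G \<Longrightarrow> b \<in> carrier G \<Longrightarrow>
   comm G a (inv b) = b \<otimes> inv (comm G a b) \<otimes> inv b"
  by (simp add: comm_def m_assoc inv_mult_group)

lemma comm_mult_left: "a \<in> carrier G \<Longrightarrow> b \<in> carrier G \<Longrightarrow> c \<in> carrier G \<Longrightarrow>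
   comm G (a \<otimes> b) c = inv b \<otimes> comm G a c \<otimes> b \<otimes> comm G b c"
  by (simp add: comm_def m_assoc inv_mult_group)

lemma comm_inv_left: "a \<in> carrier G \<Longrightarrow> c \<in> carrier G \<Longrightarrow>
   comm G (inv a) c = a \<otimes> inv (comm G a c) \<otimes> inv a"
  by (simp add: comm_def m_assoc inv_mult_group)

lemma comm_conj_left: "a \<in> carrier G \<Longrightarrow> x \<in> carrier G \<Longrightarrow> c \<in> carrier G \<Longrightarrow>
   comm G (x \<otimes> a \<otimes> inv x) c = x \<otimes> comm G a (inv x \<otimes> c \<otimes> x) \<otimes> inv x"
  by (simp add: comm_def m_assoc inv_mult_group)

lemma normal_conj1: "K \<lhd> G \<Longrightarrow> x \<in> carrier G \<Longrightarrow> k \<in> K \<Longrightarrow> x \<otimes> k \<otimes> inv x \<in> K"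
  using normal_inv_iff by blast

lemma normal_conj2: "K \<lhd> G \<Longrightarrow> x \<in> carrier G \<Longrightarrow> k \<in> K \<Longrightarrow> inv x \<otimes> k \<otimes> x \<in> K"
  using normal_conj1[of K "inv x" k] by simp

lemma evalw_rev_inv: "range g \<subseteq> carrier G \<Longrightarrow> evalw G g (rev (map inv_letter w)) = inv (evalw G g w)"
  by (induction w) (auto simp: evalw_Cons evalw_Nil evalw_append lval_inv lval_closed
      evalw_closed inv_mult_group)

lemma conj_gen:
  assumes sK: "subgroup K G" and g: "range g \<subseteq> carrier G"
    and gen: "\<And>p k. k \<in> K \<Longrightarrow> g p \<otimes> k \<otimes> inv (g p) \<in> K"
    and gen': "\<And>p k. k \<in> K \<Longrightarrow> inv (g p) \<otimes> k \<otimes> g p \<in> K"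
  shows "k \<in> K \<Longrightarrow> evalw G g w \<otimes> k \<otimes> inv (evalw G g w) \<in> K"
proof (induction w arbitrary: k)
  case Nil
  then have "k \<in> carrier G" by (rule subgroup.mem_carrier[OF sK])
  then show ?case using Nil by (simp add: evalw_Nil)
next
  case (Cons l w)
  have kc: "k \<in> carrier G" using Cons.prems by (rule subgroup.mem_carrier[OF sK])
  have lc: "lval G g l \<in> carrier G" using g by (rule lval_closed)
  have ec: "evalw G g w \<in> carrier G" using g by (rule evalw_closed)
  have e: "evalw G g (l # w) \<otimes> k \<otimes> inv (evalw G g (l # w)) =
      lval G g l \<otimes> (evalw G g w \<otimes> k \<otimes> inv (evalw G g w)) \<otimes> inv (lval G g l)"
    using kc lc ec by (simp only: evalw_Cons inv_mult_group m_closed inv_closed m_assoc)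
  have i: "evalw G g w \<otimes> k \<otimes> inv (evalw G g w) \<in> K" using Cons.IH Cons.prems by blast
  show ?case
  proof (cases "fst l")
    case True
    have gp: "g (snd l) \<in> carrier G" using g by (simp add: subset_iff)
    have "lval G g l = inv (g (snd l))" using True by (simp add: lval_def)
    then have "evalw G g (l # w) \<otimes> k \<otimes> inv (evalw G g (l # w)) =
       inv (g (snd l)) \<otimes> (evalw G g w \<otimes> k \<otimes> inv (evalw G g w)) \<otimes> g (snd l)"
      using e gp by (simp only: inv_inv)
    then show ?thesis using gen'[OF i] by simp
  next
    case False
    have "lval G g l = g (snd l)" using False by (simp add: lval_def)
    then show ?thesis using gen[OF i] e by simp
  qed
qed


context
  fixes g and K
  assumes sK: "subgroup K G" and g: "range g \<subseteq> carrier G"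
    and conjK: "\<And>w k. k \<in> K \<Longrightarrow> evalw G g w \<otimes> k \<otimes> inv (evalw G g w) \<in> K"
begin

lemma conjB: "k \<in> K \<Longrightarrow> inv (evalw G g w) \<otimes> k \<otimes> evalw G g w \<in> K"
  using conjK[of k "rev (map inv_letter w)"] g by (simp add: evalw_rev_inv evalw_closed)

lemma comm_evalw:
  assumes u: "u \<in> carrier G"
    and gen: "\<And>p. comm G u (g p) \<in> K"
  shows "comm G u (evalw G g w) \<in> K"
proof (induction w)
  case Nil
  have "comm G u \<one> = \<one>" using u by (simp add: comm_def)
  then show ?case using sK by (simp add: evalw_Nil subgroup.one_closed)
next
  case (Cons l w)
  have lv: "comm G u (lval G g l) \<in> K"
  proof (cases "fst l")
    case True
    have "comm G u (lval G g l) = g (snd l) \<otimes> inv (comm G u (g (snd l))) \<otimes> inv (g (snd l))"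
      using True g u by (simp add: lval_def comm_inv_right subset_iff)
    also have "\<dots> \<in> K" using conjK[of _ "gen_word (snd l)"] g gen sK
      by (simp add: subgroup.m_inv_closed evalw_gen)
    finally show ?thesis .
  next
    case False then show ?thesis using gen by (simp add: lval_def)
  qed
  have "comm G u (evalw G g (l # w)) = comm G u (evalw G g w) \<otimes>
      (inv (evalw G g w) \<otimes> comm G u (lval G g l) \<otimes> evalw G g w)"
    using g u by (simp add: evalw_Cons comm_mult_right lval_closed evalw_closed)
  also have "\<dots> \<in> K" using Cons lv conjB sK g
    by (simp add: subgroup.m_closed evalw_closed)
  finally show ?case .
qed

definition Zc :: "'a set" where
  "Zc = {u. (\<exists>w. u = evalw G g w) \<and> (\<forall>w. comm G u (evalw G g w) \<in> K)}"

lemma Zc_mult: "u \<in> Zc \<Longrightarrow> v \<in> Zc \<Longrightarrow> u \<otimes> v \<in> Zc"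
proof -
  assume u: "u \<in> Zc" and v: "v \<in> Zc"
  obtain wu wv where wu: "u = evalw G g wu" and wv: "v = evalw G g wv" using u v by (auto simp: Zc_def)
  { fix w
    have "comm G (u \<otimes> v) (evalw G g w) = inv v \<otimes> comm G u (evalw G g w) \<otimes> v \<otimes> comm G v (evalw G g w)"
      using wu wv g by (simp add: comm_mult_left evalw_closed)
    also have "\<dots> \<in> K" using u v conjB[of _ wv] sK wv unfolding Zc_def
      by (simp add: subgroup.m_closed)
    finally have "comm G (u \<otimes> v) (evalw G g w) \<in> K" . }
  moreover have "u \<otimes> v = evalw G g (wu @ wv)" using wu wv g by (simp add: evalw_append)
  ultimately show ?thesis by (auto simp: Zc_def)
qed

lemma Zc_inv: "u \<in> Zc \<Longrightarrow> inv u \<in> Zc"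
proof -
  assume u: "u \<in> Zc"
  obtain wu where wu: "u = evalw G g wu" using u by (auto simp: Zc_def)
  { fix w
    have "comm G (inv u) (evalw G g w) = u \<otimes> inv (comm G u (evalw G g w)) \<otimes> inv u"
      using wu g by (simp add: comm_inv_left evalw_closed)
    also have "\<dots> \<in> K" using u conjK[of _ wu] sK wu unfolding Zc_def
      by (simp add: subgroup.m_inv_closed)
    finally have "comm G (inv u) (evalw G g w) \<in> K" . }
  moreover have "inv u = evalw G g (rev (map inv_letter wu))" using wu g by (simp add: evalw_rev_inv)
  ultimately show ?thesis by (auto simp: Zc_def)
qed

lemma Zc_conj: "u \<in> Zc \<Longrightarrow> evalw G g f \<otimes> u \<otimes> inv (evalw G g f) \<in> Zc"
proof -
  assume u: "u \<in> Zc"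
  obtain wu where wu: "u = evalw G g wu" using u by (auto simp: Zc_def)
  let ?x = "evalw G g f"
  have x: "?x \<in> carrier G" using g by (simp add: evalw_closed)
  { fix w
    have e: "inv ?x \<otimes> evalw G g w \<otimes> ?x = evalw G g (rev (map inv_letter f) @ w @ f)"
      using g by (simp add: evalw_append evalw_rev_inv evalw_closed m_assoc)
    have "comm G (?x \<otimes> u \<otimes> inv ?x) (evalw G g w) = ?x \<otimes> comm G u (inv ?x \<otimes> evalw G g w \<otimes> ?x) \<otimes> inv ?x"
      using wu g x by (simp add: comm_conj_left evalw_closed)
    also have "\<dots> \<in> K" using u conjK[of _ f] unfolding Zc_def e
      by simp
    finally have "comm G (?x \<otimes> u \<otimes> inv ?x) (evalw G g w) \<in> K" . }
  moreover have "?x \<otimes> u \<otimes> inv ?x = evalw G g (f @ wu @ rev (map inv_letter f))"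
    using wu g by (simp add: evalw_append evalw_rev_inv evalw_closed m_assoc)
  ultimately show ?thesis by (auto simp: Zc_def)
qed

lemma detect:
  assumes A: "A \<subseteq> carrier (free_grp S)"
    and rels: "\<And>r p. r \<in> A \<Longrightarrow> comm G (evalw G g r) (g p) \<in> K"
  shows "evalw G g ` comm_subgroup (free_grp S) (normal_closure (free_grp S) A) (carrier (free_grp S)) \<subseteq> K"
proof -
  interpret F: group "free_grp S" by (rule group_free_grp)
  interpret h: group_hom "free_grp S" G "evalw G g" by (rule evalw_group_hom[OF g])
  let ?h = "evalw G g"
  have Ar: "r \<in> A \<Longrightarrow> ?h r \<in> Zc" for r
    using comm_evalw[OF _ rels] g unfolding Zc_def by (auto simp: evalw_closed)
  let ?B = "{x \<otimes>\<^bsub>free_grp S\<^esub> a \<otimes>\<^bsub>free_grp S\<^esub> inv\<^bsub>free_grp S\<^esub> x | x a. x \<in> carrier (free_grp S) \<and> a \<in> A}"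
  have Bc: "?B \<subseteq> carrier (free_grp S)" using A by auto
  have hB: "h \<in> ?B \<Longrightarrow> ?h h \<in> Zc" for h
  proof -
    assume "h \<in> ?B"
    then obtain x a where xa: "h = x \<otimes>\<^bsub>free_grp S\<^esub> a \<otimes>\<^bsub>free_grp S\<^esub> inv\<^bsub>free_grp S\<^esub> x"
      "x \<in> carrier (free_grp S)" "a \<in> A" by blast
    have "?h h = ?h x \<otimes> ?h a \<otimes> inv (?h x)" using xa A by auto
    then show ?thesis using Zc_conj[OF Ar[OF xa(3)]] by simp
  qed
  have R: "y \<in> generate (free_grp S) ?B \<Longrightarrow> ?h y \<in> Zc" for y
  proof (induction rule: generate.induct)
    case one
    have e: "\<one> = ?h []" by (simp add: evalw_Nil)
    have "comm G \<one> (?h w) = \<one>" for w using g by (simp add: comm_def evalw_closed)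
    then have "\<forall>w. comm G \<one> (?h w) \<in> K" using sK by (simp add: subgroup.one_closed)
    moreover have "?h \<one>\<^bsub>free_grp S\<^esub> = \<one>" by (simp add: FF_one evalw_Nil)
    ultimately show ?case using e unfolding Zc_def by auto
  next
    case (incl h) then show ?case using hB by blast
  next
    case (inv h)
    then have "h \<in> carrier (free_grp S)" using Bc by blast
    then have "?h (inv\<^bsub>free_grp S\<^esub> h) = inv (?h h)" by simp
    then show ?case using Zc_inv inv hB by simp
  next
    case (eng h1 h2)
    have "h1 \<in> carrier (free_grp S)" "h2 \<in> carrier (free_grp S)"
      using eng(1,2) F.generate_incl[OF Bc] by auto
    then have "?h (h1 \<otimes>\<^bsub>free_grp S\<^esub> h2) = ?h h1 \<otimes> ?h h2" by simp
    then show ?case using Zc_mult eng by simp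
  qed
  have Rc: "normal_closure (free_grp S) A \<subseteq> carrier (free_grp S)"
    unfolding normal_closure_def using F.generate_incl[OF Bc] .
  let ?C = "{comm (free_grp S) a b | a b. a \<in> normal_closure (free_grp S) A \<and> b \<in> carrier (free_grp S)}"
  have Cc: "?C \<subseteq> carrier (free_grp S)" using Rc by (auto simp: comm_def)
  have hC: "h \<in> ?C \<Longrightarrow> ?h h \<in> K" for h
  proof -
    assume "h \<in> ?C"
    then obtain a b where ab: "h = comm (free_grp S) a b" "a \<in> normal_closure (free_grp S) A"
      "b \<in> carrier (free_grp S)" by blast
    have ac: "a \<in> carrier (free_grp S)" using ab Rc by blast
    have "?h h = comm G (?h a) (?h b)" using ab ac by (simp add: comm_def)
    moreover have "?h a \<in> Zc" using R ab(2) unfolding normal_closure_def by blast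
    ultimately show ?thesis unfolding Zc_def by simp
  qed
  have "y \<in> generate (free_grp S) ?C \<Longrightarrow> ?h y \<in> K" for y
  proof (induction rule: generate.induct)
    case one then show ?case using sK by (simp add: subgroup.one_closed)
  next
    case (incl h) then show ?case using hC by blast
  next
    case (inv h)
    then have "h \<in> carrier (free_grp S)" using Cc by blast
    then have "?h (inv\<^bsub>free_grp S\<^esub> h) = inv (?h h)" by simp
    then show ?case using inv sK Cc hC by (auto simp: subgroup.m_inv_closed)
  next
    case (eng h1 h2)
    have "h1 \<in> carrier (free_grp S)" "h2 \<in> carrier (free_grp S)"
      using eng(1,2) F.generate_incl[OF Cc] by auto
    then have "?h (h1 \<otimes>\<^bsub>free_grp S\<^esub> h2) = ?h h1 \<otimes> ?h h2" by simp
    then show ?case using eng sK by (simp add: subgroup.m_closed)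
  qed
  then show ?thesis unfolding comm_subgroup_def by blast
qed

end
end


datatype u5 = U int int int int int int int int int int

fun umul :: "u5 \<Rightarrow> u5 \<Rightarrow> u5" where
  "umul (U x1 x2 x3 x4 x5 x6 x7 x8 x9 x10) (U y1 y2 y3 y4 y5 y6 y7 y8 y9 y10) =
    U (x1+y1) (x2+y2) (x3+y3) (x4+y4) (x5+y5+x1 * y2) (x6+y6+x2 * y3) (x7+y7+x3 * y4)
      (x8+y8+x1 * y6+x5 * y3) (x9+y9+x2 * y7+x6 * y4) (x10+y10+x1 * y9+x5 * y7+x8 * y4)"

fun uinv :: "u5 \<Rightarrow> u5" where
  "uinv (U x1 x2 x3 x4 x5 x6 x7 x8 x9 x10) =
    (let y5 = -x5 + x1 * x2; y6 = -x6 + x2 * x3; y7 = -x7 + x3 * x4;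
         y8 = -x8 - x1 * y6 + x5 * x3; y9 = -x9 - x2 * y7 + x6 * x4;
         y10 = -x10 - x1 * y9 - x5 * y7 + x8 * x4
     in U (-x1) (-x2) (-x3) (-x4) y5 y6 y7 y8 y9 y10)"

definition uone :: u5 where "uone = U 0 0 0 0 0 0 0 0 0 0"

definition UT :: "u5 monoid" where
  "UT = \<lparr>carrier = UNIV, monoid.mult = umul, one = uone\<rparr>"

lemma UT_simps[simp]: "carrier UT = UNIV" "x \<otimes>\<^bsub>UT\<^esub> y = umul x y" "\<one>\<^bsub>UT\<^esub> = uone"
  by (simp_all add: UT_def)

lemma umul_assoc: "umul (umul x y) z = umul x (umul y z)"
  by (cases x; cases y; cases z) (simp add: algebra_simps)

lemma uone_mul[simp]: "umul uone x = x" "umul x uone = x"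
  by (cases x; simp add: uone_def)+

lemma uinv_mul[simp]: "umul (uinv x) x = uone" "umul x (uinv x) = uone"
  by (cases x; simp add: uone_def Let_def algebra_simps)+

lemma group_UT: "group UT"
proof (rule groupI)
  fix x :: u5
  show "\<exists>y\<in>carrier UT. y \<otimes>\<^bsub>UT\<^esub> x = \<one>\<^bsub>UT\<^esub>"
    by (rule bexI[of _ "uinv x"]) auto
qed (auto simp: umul_assoc)

interpretation UTg: group UT by (rule group_UT)

lemma UT_inv[simp]: "inv\<^bsub>UT\<^esub> x = uinv x"
  by (rule UTg.inv_equality) auto

lemma uinv_uinv[simp]: "uinv (uinv x) = x"
  using UTg.inv_inv[of x] by simp

fun nm :: "u5 \<Rightarrow> u5 \<Rightarrow> u5" where
  "nm (U x1 x2 x3 x4 x5 x6 x7 x8 x9 x10) (U y1 y2 y3 y4 y5 y6 y7 y8 y9 y10) =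
    U 0 0 0 0 (x1 * y2) (x2 * y3) (x3 * y4) (x1 * y6+x5 * y3) (x2 * y7+x6 * y4) (x1 * y9+x5 * y7+x8 * y4)"

fun nadd :: "u5 \<Rightarrow> u5 \<Rightarrow> u5" where
  "nadd (U x1 x2 x3 x4 x5 x6 x7 x8 x9 x10) (U y1 y2 y3 y4 y5 y6 y7 y8 y9 y10) =
    U (x1+y1) (x2+y2) (x3+y3) (x4+y4) (x5+y5) (x6+y6) (x7+y7) (x8+y8) (x9+y9) (x10+y10)"

fun nsc :: "int \<Rightarrow> u5 \<Rightarrow> u5" where
  "nsc k (U x1 x2 x3 x4 x5 x6 x7 x8 x9 x10) = U (k * x1) (k * x2) (k * x3) (k * x4) (k * x5) (k * x6) (k * x7) (k * x8) (k * x9) (k * x10)"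

definition upow :: "nat \<Rightarrow> u5 \<Rightarrow> u5" where
  "upow m x = (let x2 = nm x x; x3 = nm x2 x; x4 = nm x3 x in
     nadd (nadd (nsc (int m) x) (nsc (int (m choose 2)) x2))
          (nadd (nsc (int (m choose 3)) x3) (nsc (int (m choose 4)) x4)))"

lemma ch_Suc: "int (Suc m choose 2) = int (m choose 2) + int m"
  "int (Suc m choose 3) = int (m choose 3) + int (m choose 2)"
  "int (Suc m choose 4) = int (m choose 4) + int (m choose 3)"
  by (simp_all add: eval_nat_numeral)

lemma upow_Suc: "upow (Suc m) x = umul (upow m x) x"
  by (cases x) (simp add: upow_def ch_Suc algebra_simps)

lemma upow_0: "upow 0 x = uone"
  by (cases x) (simp add: upow_def uone_def binomial_eq_0)

lemma UT_pow[simp]: "x [^]\<^bsub>UT\<^esub> (m::nat) = upow m x"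
  by (induction m) (simp_all add: upow_0 upow_Suc)


datatype tag = T1 nat | T2 nat nat | T3 nat nat | T4 nat nat | T5 nat nat
  | T6 nat | T7 nat | T8 nat | T9 nat | T10 nat | T11 nat | T12 nat | T13 nat

definition tags :: "nat \<Rightarrow> tag list" where
  "tags n = [T1 i. i \<leftarrow> [1..<n]]
   @ concat [concat [[T2 i j, T3 i j, T4 i j, T5 i j]. j \<leftarrow> [i+2..<n]]. i \<leftarrow> [1..<n]]
   @ concat [[T6 i, T7 i, T8 i, T9 i, T10 i, T11 i]. i \<leftarrow> [1..<n-1]]
   @ concat [[T12 i, T13 i]. i \<leftarrow> [1..<n-2]]"

fun elt :: "nat \<Rightarrow> tag \<Rightarrow> (nat \<times> bool) letter list" where
  "elt n (T1 i) = comm (FF n) (s1 i) (sx i)"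
| "elt n (T2 i j) = comm (FF n) (s1 i) (s1 j)"
| "elt n (T3 i j) = comm (FF n) (sx i) (sx j) \<otimes>\<^bsub>FF n\<^esub> inv\<^bsub>FF n\<^esub> (comm (FF n) (s1 i) (s1 j))"
| "elt n (T4 i j) = comm (FF n) (sx i) (s1 j) \<otimes>\<^bsub>FF n\<^esub> inv\<^bsub>FF n\<^esub> (comm (FF n) (sx i) (sx j))"
| "elt n (T5 i j) = comm (FF n) (s1 i) (sx j) \<otimes>\<^bsub>FF n\<^esub> inv\<^bsub>FF n\<^esub> (comm (FF n) (sx i) (sx j))"
| "elt n (T6 i) = comm (FF n) (s1 i) (sx (i+1)) \<otimes>\<^bsub>FF n\<^esub> inv\<^bsub>FF n\<^esub> (comm (FF n) (sx i) (s1 (i+1)))"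
| "elt n (T7 i) = comm (FF n) (sx i) (sx (i+1)) \<otimes>\<^bsub>FF n\<^esub> inv\<^bsub>FF n\<^esub> (comm (FF n) (sx i) (s1 (i+1)))"
| "elt n (T8 i) = comm3 (FF n) (s1 i) (s1 (i+1)) (s1 i)"
| "elt n (T9 i) = comm3 (FF n) (s1 i) (s1 (i+1)) (s1 (i+1) \<otimes>\<^bsub>FF n\<^esub> inv\<^bsub>FF n\<^esub> (s1 i))"
| "elt n (T10 i) = comm3 (FF n) (s1 i) (s1 (i+1)) (sx i \<otimes>\<^bsub>FF n\<^esub> inv\<^bsub>FF n\<^esub> (s1 i))"
| "elt n (T11 i) = comm3 (FF n) (s1 i) (s1 (i+1))
     ((sx i \<otimes>\<^bsub>FF n\<^esub> inv\<^bsub>FF n\<^esub> (sx (i+1))) \<otimes>\<^bsub>FF n\<^esub> inv\<^bsub>FF n\<^esub> (s1 i \<otimes>\<^bsub>FF n\<^esub> inv\<^bsub>FF n\<^esub> (s1 (i+1))))"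
| "elt n (T12 i) = comm4 (FF n) (s1 i) (s1 (i+1)) (s1 (i+2)) (s1 (i+1))"
| "elt n (T13 i) = comm4 (FF n) (s1 i) (s1 (i+1)) (s1 (i+2)) (sx (i+1) \<otimes>\<^bsub>FF n\<^esub> inv\<^bsub>FF n\<^esub> (s1 (i+1)))"

fun Nt :: "nat \<Rightarrow> nat \<Rightarrow> tag \<Rightarrow> nat" where
  "Nt m1 m2 (T1 i) = m1"
| "Nt m1 m2 (T2 i j) = m2"
| "Nt m1 m2 (T3 i j) = m1"
| "Nt m1 m2 (T4 i j) = m1"
| "Nt m1 m2 (T5 i j) = m1"
| "Nt m1 m2 (T6 i) = m1"
| "Nt m1 m2 (T7 i) = m1"
| "Nt m1 m2 (T8 i) = m2"
| "Nt m1 m2 (T9 i) = gcd m2 (m2 choose 2)"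
| "Nt m1 m2 (T10 i) = m1"
| "Nt m1 m2 (T11 i) = gcd m1 (m1 choose 2)"
| "Nt m1 m2 (T12 i) = gcd 2 m2"
| "Nt m1 m2 (T13 i) = gcd 2 m1"

lemma elem_list_tags: "elem_list n m1 m2 = map (\<lambda>t. (elt n t, Nt m1 m2 t)) (tags n)"
  by (simp add: elem_list_def tags_def map_concat Let_def comp_def)

lemma distinct_concat_map_disj:
  "distinct xs \<Longrightarrow> (\<forall>x\<in>set xs. distinct (f x)) \<Longrightarrow>
   (\<forall>x\<in>set xs. \<forall>y\<in>set xs. x \<noteq> y \<longrightarrow> set (f x) \<inter> set (f y) = {}) \<Longrightarrow>
   distinct (concat (map f xs))"
  by (induction xs) auto

lemma distinct_tags: "distinct (tags n)"
  unfolding tags_def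
  by (auto simp: distinct_map inj_on_def intro!: distinct_concat_map_disj)


definition ucomm :: "u5 \<Rightarrow> u5 \<Rightarrow> u5" where
  "ucomm x y = umul (umul (umul (uinv x) (uinv y)) x) y"

lemma comm_UT[simp]: "comm UT x y = ucomm x y"
  by (simp add: comm_def ucomm_def)

interpretation FFg: group "FF n" unfolding FF_def by (rule group_free_grp)

lemma gen_carrier: "1 \<le> i \<Longrightarrow> i \<le> n - 1 \<Longrightarrow> gen_word (i, b) \<in> carrier (FF n)"
  by (auto simp: FF_def FF_carrier gen_word_def UT_gens_def)

lemma s1_carrier[simp]: "1 \<le> i \<Longrightarrow> i \<le> n - 1 \<Longrightarrow> s1 i \<in> carrier (FF n)"
  and sx_carrier[simp]: "1 \<le> i \<Longrightarrow> i \<le> n - 1 \<Longrightarrow> sx i \<in> carrier (FF n)"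
  and sb_carrier[simp]: "1 \<le> i \<Longrightarrow> i \<le> n - 1 \<Longrightarrow> sb i b \<in> carrier (FF n)"
  by (simp_all add: s1_def sx_def sb_def gen_carrier)

lemma FF_comm_carrier[simp]: "a \<in> carrier (FF n) \<Longrightarrow> b \<in> carrier (FF n) \<Longrightarrow> comm (FF n) a b \<in> carrier (FF n)"
  by (simp add: comm_def)

lemma FF_comm3_carrier[simp]: "a \<in> carrier (FF n) \<Longrightarrow> b \<in> carrier (FF n) \<Longrightarrow> c \<in> carrier (FF n) \<Longrightarrow> comm3 (FF n) a b c \<in> carrier (FF n)"
  by (simp add: comm3_def)
lemma FF_comm4_carrier[simp]: "a \<in> carrier (FF n) \<Longrightarrow> b \<in> carrier (FF n) \<Longrightarrow> c \<in> carrier (FF n) \<Longrightarrow> d \<in> carrier (FF n) \<Longrightarrow> comm4 (FF n) a b c d \<in> carrier (FF n)"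
  by (simp add: comm4_def)

abbreviation hh :: "(nat \<times> bool \<Rightarrow> u5) \<Rightarrow> (nat \<times> bool) letter list \<Rightarrow> u5" where
  "hh g \<equiv> evalw UT g"

lemma hh_mult[simp]: "hh g (x \<otimes>\<^bsub>FF n\<^esub> y) = umul (hh g x) (hh g y)"
  using UTg.evalw_reduce[of g] UTg.evalw_append[of g]
  by (simp add: FF_def FF_mult)

lemma hh_one[simp]: "hh g \<one>\<^bsub>FF n\<^esub> = uone"
  by (simp add: FF_def FF_one UTg.evalw_Nil)

lemma hh_inv[simp]: "x \<in> carrier (FF n) \<Longrightarrow> hh g (inv\<^bsub>FF n\<^esub> x) = uinv (hh g x)"
proof -
  assume x: "x \<in> carrier (FF n)"
  interpret h: group_hom "FF n" UT "hh g" unfolding FF_def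
    by (rule UTg.evalw_group_hom) simp
  show ?thesis using h.hom_inv x by simp
qed

lemma hh_pow[simp]: "hh g (x [^]\<^bsub>FF n\<^esub> (m::nat)) = upow m (hh g x)"
  by (induction m) (simp_all add: upow_0 upow_Suc)

lemma hh_comm[simp]: "a \<in> carrier (FF n) \<Longrightarrow> b \<in> carrier (FF n) \<Longrightarrow> hh g (comm (FF n) a b) = ucomm (hh g a) (hh g b)"
  by (simp add: comm_def ucomm_def)

lemma hh_comm3[simp]: "a \<in> carrier (FF n) \<Longrightarrow> b \<in> carrier (FF n) \<Longrightarrow> c \<in> carrier (FF n) \<Longrightarrow>
  hh g (comm3 (FF n) a b c) = ucomm (ucomm (hh g a) (hh g b)) (hh g c)"
  by (simp add: comm3_def)

lemma hh_comm4[simp]: "a \<in> carrier (FF n) \<Longrightarrow> b \<in> carrier (FF n) \<Longrightarrow> c \<in> carrier (FF n) \<Longrightarrow> d \<in> carrier (FF n) \<Longrightarrow>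
  hh g (comm4 (FF n) a b c d) = ucomm (ucomm (ucomm (hh g a) (hh g b)) (hh g c)) (hh g d)"
  by (simp add: comm4_def comm3_def)

lemma hh_s1[simp]: "hh g (s1 i) = g (i, False)"
  and hh_sx[simp]: "hh g (sx i) = g (i, True)"
  and hh_sb[simp]: "hh g (sb i b) = g (i, b)"
  by (simp_all add: s1_def sx_def sb_def UTg.evalw_gen)

definition RelImg :: "(nat \<times> bool \<Rightarrow> u5) \<Rightarrow> nat \<Rightarrow> nat \<Rightarrow> nat \<Rightarrow> u5 set" where
  "RelImg g n m1 m2 =
      {umul (upow m1 (g (i,False))) (uinv (upow m1 (g (i,True)))) | i. 1 \<le> i \<and> i \<le> n - 1}
    \<union> {upow m2 (g (i,True)) | i. 1 \<le> i \<and> i \<le> n - 1}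
    \<union> {ucomm (g (i,False)) (g (i,True)) | i. 1 \<le> i \<and> i \<le> n - 1}
    \<union> {ucomm (g (i,a)) (g (j,b)) | i j a b. 1 \<le> i \<and> i + 1 < j \<and> j \<le> n - 1}
    \<union> {umul (ucomm (uinv (g (i,a))) (uinv (g (i+1,True)))) (uinv (ucomm (g (i,True)) (g (i+1,False))))
         | i a. 1 \<le> i \<and> i \<le> n - 2}
    \<union> {ucomm (ucomm (g (i,a)) (g (i+1,False))) (g (i,False)) | i a. 1 \<le> i \<and> i \<le> n - 2}
    \<union> {ucomm (ucomm (g (i,a)) (g (i+1,False))) (g (i+1,False)) | i a. 1 \<le> i \<and> i \<le> n - 2}
    \<union> {ucomm (ucomm (g (i,a)) (g (i+1,False))) (ucomm (g (i+1,b)) (g (i+2,False)))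
         | i a b. 1 \<le> i \<and> i \<le> n - 3}"

lemma rels_img: "r \<in> UT_rels n m1 m2 \<Longrightarrow> hh g r \<in> RelImg g n m1 m2"
  unfolding UT_rels_def RelImg_def Let_def
  apply (elim UnE CollectE exE conjE)
  by (simp; blast)+

lemma rels_carrier: "UT_rels n m1 m2 \<subseteq> carrier (FF n)"
  unfolding UT_rels_def Let_def by auto

fun eltI :: "(nat \<times> bool \<Rightarrow> u5) \<Rightarrow> tag \<Rightarrow> u5" where
  "eltI g (T1 i) = ucomm (g (i,False)) (g (i,True))"
| "eltI g (T2 i j) = ucomm (g (i,False)) (g (j,False))"
| "eltI g (T3 i j) = umul (ucomm (g (i,True)) (g (j,True))) (uinv (ucomm (g (i,False)) (g (j,False))))"
| "eltI g (T4 i j) = umul (ucomm (g (i,True)) (g (j,False))) (uinv (ucomm (g (i,True)) (g (j,True))))"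
| "eltI g (T5 i j) = umul (ucomm (g (i,False)) (g (j,True))) (uinv (ucomm (g (i,True)) (g (j,True))))"
| "eltI g (T6 i) = umul (ucomm (g (i,False)) (g (i+1,True))) (uinv (ucomm (g (i,True)) (g (i+1,False))))"
| "eltI g (T7 i) = umul (ucomm (g (i,True)) (g (i+1,True))) (uinv (ucomm (g (i,True)) (g (i+1,False))))"
| "eltI g (T8 i) = ucomm (ucomm (g (i,False)) (g (i+1,False))) (g (i,False))"
| "eltI g (T9 i) = ucomm (ucomm (g (i,False)) (g (i+1,False))) (umul (g (i+1,False)) (uinv (g (i,False))))"
| "eltI g (T10 i) = ucomm (ucomm (g (i,False)) (g (i+1,False))) (umul (g (i,True)) (uinv (g (i,False))))"
| "eltI g (T11 i) = ucomm (ucomm (g (i,False)) (g (i+1,False)))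
     (umul (umul (g (i,True)) (uinv (g (i+1,True)))) (uinv (umul (g (i,False)) (uinv (g (i+1,False))))))"
| "eltI g (T12 i) = ucomm (ucomm (ucomm (g (i,False)) (g (i+1,False))) (g (i+2,False))) (g (i+1,False))"
| "eltI g (T13 i) = ucomm (ucomm (ucomm (g (i,False)) (g (i+1,False))) (g (i+2,False)))
     (umul (g (i+1,True)) (uinv (g (i+1,False))))"

lemma tags_valid: "t \<in> set (tags n) \<Longrightarrow>
   (case t of T1 i \<Rightarrow> 1 \<le> i \<and> i \<le> n - 1
    | T2 i j \<Rightarrow> 1 \<le> i \<and> i + 2 \<le> j \<and> j \<le> n - 1
    | T3 i j \<Rightarrow> 1 \<le> i \<and> i + 2 \<le> j \<and> j \<le> n - 1
    | T4 i j \<Rightarrow> 1 \<le> i \<and> i + 2 \<le> j \<and> j \<le> n - 1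
    | T5 i j \<Rightarrow> 1 \<le> i \<and> i + 2 \<le> j \<and> j \<le> n - 1
    | T6 i \<Rightarrow> 1 \<le> i \<and> i \<le> n - 2
    | T7 i \<Rightarrow> 1 \<le> i \<and> i \<le> n - 2
    | T8 i \<Rightarrow> 1 \<le> i \<and> i \<le> n - 2
    | T9 i \<Rightarrow> 1 \<le> i \<and> i \<le> n - 2
    | T10 i \<Rightarrow> 1 \<le> i \<and> i \<le> n - 2
    | T11 i \<Rightarrow> 1 \<le> i \<and> i \<le> n - 2
    | T12 i \<Rightarrow> 1 \<le> i \<and> i \<le> n - 3
    | T13 i \<Rightarrow> 1 \<le> i \<and> i \<le> n - 3)"
  unfolding tags_def by auto

lemma elt_carrier: "t \<in> set (tags n) \<Longrightarrow> elt n t \<in> carrier (FF n)"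
  by (drule tags_valid) (cases t; clarsimp)

lemma hh_elt: "t \<in> set (tags n) \<Longrightarrow> hh g (elt n t) = eltI g t"
  by (drule tags_valid) (cases t; clarsimp)


lemma hh_closed: "range g \<subseteq> carrier UT" by simp

lemma hh_conj:
  assumes sK: "subgroup K UT"
    and cg: "\<And>p k. k \<in> K \<Longrightarrow> umul (umul (g p) k) (uinv (g p)) \<in> K"
    and cg': "\<And>p k. k \<in> K \<Longrightarrow> umul (umul (uinv (g p)) k) (g p) \<in> K"
  shows "k \<in> K \<Longrightarrow> umul (umul (hh g w) k) (uinv (hh g w)) \<in> K"
  using UTg.conj_gen[OF sK hh_closed, where k=k and w=w] cg cg' by simp

lemma hh_conj':
  assumes sK: "subgroup K UT"
    and cg: "\<And>p k. k \<in> K \<Longrightarrow> umul (umul (g p) k) (uinv (g p)) \<in> K"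
    and cg': "\<And>p k. k \<in> K \<Longrightarrow> umul (umul (uinv (g p)) k) (g p) \<in> K"
  shows "k \<in> K \<Longrightarrow> umul (umul (uinv (hh g w)) k) (hh g w) \<in> K"
  using hh_conj[where K=K and g=g, OF sK cg cg', where k=k and w="rev (map inv_letter w)"] UTg.evalw_rev_inv[of g w]
  by (simp add: uinv_uinv)

lemma design_detect:
  assumes sK: "subgroup K UT"
    and cg: "\<And>p k. k \<in> K \<Longrightarrow> umul (umul (g p) k) (uinv (g p)) \<in> K"
    and cg': "\<And>p k. k \<in> K \<Longrightarrow> umul (umul (uinv (g p)) k) (g p) \<in> K"
    and rel: "\<And>u q. u \<in> RelImg g n m1 m2 \<Longrightarrow> ucomm u (g q) \<in> K"
  shows "hh g ` comm_subgroup (FF n) (RR n m1 m2) (carrier (FF n)) \<subseteq> K"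
proof -
  have c: "\<And>w k. k \<in> K \<Longrightarrow> hh g w \<otimes>\<^bsub>UT\<^esub> k \<otimes>\<^bsub>UT\<^esub> inv\<^bsub>UT\<^esub> (hh g w) \<in> K"
    using hh_conj[OF sK cg cg'] by simp
  have r: "\<And>r p. r \<in> UT_rels n m1 m2 \<Longrightarrow> comm UT (hh g r) (g p) \<in> K"
    using rel rels_img by simp
  show ?thesis
    using UTg.detect[OF sK hh_closed c, of "UT_rels n m1 m2" "UT_gens n"] rels_carrier[of n m1 m2] r
    unfolding RR_def FF_def by blast
qed

lemma prodfilter:
  assumes sK: "subgroup K UT"
    and cg: "\<And>p k. k \<in> K \<Longrightarrow> umul (umul (g p) k) (uinv (g p)) \<in> K"
    and cg': "\<And>p k. k \<in> K \<Longrightarrow> umul (umul (uinv (g p)) k) (g p) \<in> K"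
    and kill: "\<And>k. k \<in> set ps \<Longrightarrow> \<not> Q k \<Longrightarrow> hh g (f k) \<in> K"
  shows "umul a (foldr umul (map (\<lambda>k. hh g (f k)) ps) uone) \<in> K \<Longrightarrow> (\<exists>w. a = hh g w) \<Longrightarrow>
         umul a (foldr umul (map (\<lambda>k. hh g (f k)) (filter Q ps)) uone) \<in> K"
  using kill
proof (induction ps arbitrary: a)
  case Nil then show ?case by simp
next
  case (Cons k ps)
  obtain w where w: "a = hh g w" using Cons.prems by blast
  let ?P = "foldr umul (map (\<lambda>k. hh g (f k)) ps) uone"
  have P: "?P = hh g (concat (map f ps))"
    by (induction ps) (simp_all add: UTg.evalw_Nil UTg.evalw_append)
  show ?case
  proof (cases "Q k")
    case True
    have "umul (umul a (hh g (f k))) ?P \<in> K" using Cons.prems(1) by (simp add: umul_assoc)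
    moreover have "umul a (hh g (f k)) = hh g (w @ f k)" using w by (simp add: UTg.evalw_append)
    ultimately have "umul (umul a (hh g (f k))) (foldr umul (map (\<lambda>k. hh g (f k)) (filter Q ps)) uone) \<in> K"
      using Cons.IH Cons.prems by auto
    then show ?thesis using True by (simp add: umul_assoc)
  next
    case False
    have kk: "hh g (f k) \<in> K" using Cons.prems False by auto
    have x: "umul a (umul (hh g (f k)) ?P) \<in> K" using Cons.prems(1) by (simp add: comp_def)
    have ik: "inv\<^bsub>UT\<^esub> (hh g (f k)) \<in> K" using sK kk by (rule subgroup.m_inv_closed)
    then have ik': "uinv (hh g (f k)) \<in> K" by simp
    have y: "umul (umul (uinv ?P) (uinv (hh g (f k)))) ?P \<in> K"
      unfolding P by (rule hh_conj'[where K=K and g=g, OF sK cg cg' ik'])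
    have "umul (umul a (umul (hh g (f k)) ?P)) (umul (umul (uinv ?P) (uinv (hh g (f k)))) ?P) \<in> K"
      using subgroup.m_closed[OF sK x y] by simp
    moreover have "umul (umul a (umul (hh g (f k)) ?P)) (umul (umul (uinv ?P) (uinv (hh g (f k)))) ?P)
       = umul a ?P"
      by (simp add: umul_assoc[symmetric]) (simp add: umul_assoc)
    ultimately have "umul a ?P \<in> K" by simp
    then show ?thesis using Cons.IH Cons.prems w False by auto
  qed
qed

lemma list_prod_hh: "hh g (list_prod (FF n) xs) = foldr umul (map (hh g) xs) uone"
  by (induction xs) (simp_all add: list_prod_def)

lemma hh_int_pow: "x \<in> carrier (FF n) \<Longrightarrow> hh g (x [^]\<^bsub>FF n\<^esub> (z::int)) = hh g x [^]\<^bsub>UT\<^esub> z"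
proof -
  assume x: "x \<in> carrier (FF n)"
  interpret h: group_hom "FF n" UT "hh g" unfolding FF_def
    by (rule UTg.evalw_group_hom) simp
  show ?thesis using h.hom_int_pow x by simp
qed

lemma apply_design:
  assumes sK: "subgroup K UT"
    and cg: "\<And>p k. k \<in> K \<Longrightarrow> umul (umul (g p) k) (uinv (g p)) \<in> K"
    and cg': "\<And>p k. k \<in> K \<Longrightarrow> umul (umul (uinv (g p)) k) (g p) \<in> K"
    and rel: "\<And>u q. u \<in> RelImg g n m1 m2 \<Longrightarrow> ucomm u (g q) \<in> K"
    and hyp: "list_prod (FF n)
             (map (\<lambda>k. fst (elem_list n m1 m2 ! k) [^]\<^bsub>FF n\<^esub> (e k :: int)) ps)
           \<in> comm_subgroup (FF n) (RR n m1 m2) (carrier (FF n))"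
    and ps: "set ps = {..<length (tags n)}"
    and kill: "\<And>k. k < length (tags n) \<Longrightarrow> \<not> Q k \<Longrightarrow> eltI g (tags n ! k) \<in> K"
  shows "foldr umul (map (\<lambda>k. eltI g (tags n ! k) [^]\<^bsub>UT\<^esub> e k) (filter Q ps)) uone \<in> K"
proof -
  let ?f = "\<lambda>k. elt n (tags n ! k) [^]\<^bsub>FF n\<^esub> (e k)"
  have tk: "k < length (tags n) \<Longrightarrow> tags n ! k \<in> set (tags n)" for k by simp
  have fe: "k < length (tags n) \<Longrightarrow> hh g (?f k) = eltI g (tags n ! k) [^]\<^bsub>UT\<^esub> e k" for k
    using hh_int_pow[OF elt_carrier[OF tk]] hh_elt[OF tk] by simp
  have eq: "map (\<lambda>k. fst (elem_list n m1 m2 ! k) [^]\<^bsub>FF n\<^esub> (e k)) ps = map ?f ps"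
    using ps by (auto simp: elem_list_tags intro!: map_cong)
  have "hh g (list_prod (FF n) (map ?f ps)) \<in> K"
    using design_detect[where K=K and g=g, OF sK cg cg' rel] hyp unfolding eq by blast
  then have A: "umul uone (foldr umul (map (\<lambda>k. hh g (?f k)) ps) uone) \<in> K"
    by (simp add: list_prod_hh comp_def)
  have kill': "k \<in> set ps \<Longrightarrow> \<not> Q k \<Longrightarrow> hh g (?f k) \<in> K" for k
  proof -
    assume "k \<in> set ps" "\<not> Q k"
    then have k: "k < length (tags n)" and kin: "eltI g (tags n ! k) \<in> K" using ps kill by auto
    have "eltI g (tags n ! k) [^]\<^bsub>UT\<^esub> e k \<in> K" using UTg.subgroup_int_pow_closed[OF sK kin] .
    then show ?thesis using fe[OF k] by (simp only:)
  qed
  have ex: "\<exists>w. uone = hh g w" by (rule exI[of _ "[]"]) (simp add: UTg.evalw_Nil)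
  have "umul uone (foldr umul (map (\<lambda>k. hh g (?f k)) (filter Q ps)) uone) \<in> K"
    by (rule prodfilter[where K=K and g=g, OF sK cg cg' kill' A ex])
  moreover have "map (\<lambda>k. hh g (?f k)) (filter Q ps) = map (\<lambda>k. eltI g (tags n ! k) [^]\<^bsub>UT\<^esub> e k) (filter Q ps)"
    using ps fe by (auto intro!: map_cong)
  ultimately show ?thesis by simp
qed


lemmas dvd_simps = dvd_add_right_iff dvd_add_left_iff dvd_mult dvd_mult2 dvd_minus_iff
  dvd_diff_right_iff dvd_diff_left_iff

lemma two_choose2: "2 * (m choose 2) = m * (m - 1)"
  by (induction m) (auto simp: eval_nat_numeral algebra_simps)

lemma int_two_choose2: "2 * int (m choose 2) = int m * (int m - 1)"
proof -
  have "int (2 * (m choose 2)) = int (m * (m - 1))" by (simp only: two_choose2)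
  then show ?thesis by (cases m) (auto simp: algebra_simps)
qed

lemma m_dvd_2c: "int m dvd 2 * int (m choose 2)"
  by (simp add: int_two_choose2)

definition "E12 = U 1 0 0 0 0 0 0 0 0 0"
definition "E24 = U 0 0 0 0 0 1 0 0 0 0"
definition "E13 = U 0 0 0 0 1 0 0 0 0 0"
definition "E34 = U 0 0 1 0 0 0 0 0 0 0"
definition "E2434 = U 0 0 1 0 0 1 0 0 0 0"
definition "A8 = U 1 1 0 0 0 0 0 0 0 0"
definition "B8 = U 1 1 1 0 0 0 0 0 0 0"
definition "Bb = U 0 1 0 1 0 0 0 0 0 0"

lemmas Edefs = E12_def E24_def E13_def E34_def E2434_def A8_def B8_def Bb_def uone_def

fun inK2 :: "int \<Rightarrow> u5 \<Rightarrow> bool" where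
  "inK2 N (U x1 x2 x3 x4 x5 x6 x7 x8 x9 x10) = (x1=0 \<and> x2=0 \<and> x3=0 \<and> x4=0 \<and> x5=0 \<and> x6=0 \<and> x7=0 \<and> N dvd x8)"

lemma subgroup_K2: "subgroup {u. inK2 N u} UT"
proof (rule UTg.subgroupI)
  have "inK2 N (U 0 0 0 0 0 0 0 0 0 0)" by simp
  then show "{u. inK2 N u} \<noteq> {}" by blast
next
  fix a assume "a \<in> {u. inK2 N u}" then show "inv\<^bsub>UT\<^esub> a \<in> {u. inK2 N u}"
    by (cases a) (auto simp: Let_def)
next
  fix a b assume "a \<in> {u. inK2 N u}" "b \<in> {u. inK2 N u}" then show "a \<otimes>\<^bsub>UT\<^esub> b \<in> {u. inK2 N u}"
    by (cases a; cases b) auto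
qed auto

lemma conj_K2: "inK2 N k \<Longrightarrow> x \<in> {uone, E12, E24, E13, E34, E2434} \<Longrightarrow>
   inK2 N (umul (umul x k) (uinv x)) \<and> inK2 N (umul (umul (uinv x) k) x)"
  by (cases k) (auto simp: Edefs)

definition gen4 :: "nat \<Rightarrow> nat \<Rightarrow> u5 \<Rightarrow> u5 \<Rightarrow> u5 \<Rightarrow> u5 \<Rightarrow> nat \<times> bool \<Rightarrow> u5" where
  "gen4 i j l1 lx r1 rx = (\<lambda>(p,b). if p = i then (if b then lx else l1)
                                 else if p = j then (if b then rx else r1) else uone)"

lemma gen4_range: "l1 \<in> S \<Longrightarrow> lx \<in> S \<Longrightarrow> r1 \<in> S \<Longrightarrow> rx \<in> S \<Longrightarrow> uone \<in> S \<Longrightarrow> gen4 i j l1 lx r1 rx q \<in> S"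
  by (auto simp: gen4_def split: prod.splits)

lemma neg_mult_div[simp]: "m \<noteq> 0 \<Longrightarrow> - (m * t) div m = - (t::int)"
  by (metis mult_minus_right nonzero_mult_div_cancel_left)


fun inK8 :: "int \<Rightarrow> int \<Rightarrow> u5 \<Rightarrow> bool" where
  "inK8 m c (U x1 x2 x3 x4 x5 x6 x7 x8 x9 x10) = (x1=0 \<and> x2=0 \<and> x3=0 \<and> x4=0 \<and> x5=0 \<and> x7=0 \<and>
     m dvd x6 \<and> m dvd x8 + c * (x6 div m))"

lemma subgroup_K8: assumes m: "m \<noteq> 0" shows "subgroup {u. inK8 m c u} UT"
proof (rule UTg.subgroupI)
  have "inK8 m c (U 0 0 0 0 0 0 0 0 0 0)" by simp
  then show "{u. inK8 m c u} \<noteq> {}" by blast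
next
  fix a assume "a \<in> {u. inK8 m c u}" then show "inv\<^bsub>UT\<^esub> a \<in> {u. inK8 m c u}"
  proof (cases a)
    case (U x1 x2 x3 x4 x5 x6 x7 x8 x9 x10)
    assume "a \<in> {u. inK8 m c u}"
    then obtain t where t: "x6 = m * t" "m dvd x8 + c * t" "x1=0" "x2=0" "x3=0" "x4=0" "x5=0" "x7=0"
      using U m by auto
    have e: "- x8 - c * t = - (x8 + c * t)" by (simp add: algebra_simps)
    have "m dvd - x8 - c * t" unfolding e dvd_minus_iff by (rule t(2))
    then show ?thesis using U t m by (simp add: Let_def algebra_simps)
  qed
next
  fix a b assume ab: "a \<in> {u. inK8 m c u}" "b \<in> {u. inK8 m c u}"
  show "a \<otimes>\<^bsub>UT\<^esub> b \<in> {u. inK8 m c u}"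
  proof (cases a; cases b)
    fix x1 x2 x3 x4 x5 x6 x7 x8 x9 x10 y1 y2 y3 y4 y5 y6 y7 y8 y9 y10
    assume a: "a = U x1 x2 x3 x4 x5 x6 x7 x8 x9 x10" and b: "b = U y1 y2 y3 y4 y5 y6 y7 y8 y9 y10"
    obtain t where t: "x6 = m * t" "m dvd x8 + c * t" "x1=0" "x2=0" "x3=0" "x4=0" "x5=0" "x7=0"
      using ab a m by auto
    obtain s where s: "y6 = m * s" "m dvd y8 + c * s" "y1=0" "y2=0" "y3=0" "y4=0" "y5=0" "y7=0"
      using ab b m by auto
    have "x6 + y6 = m * (t + s)" using t s by (simp add: algebra_simps)
    moreover have "m dvd (x8 + c * t) + (y8 + c * s)" using t s by simp
    ultimately show ?thesis using a b t s m by (simp add: algebra_simps)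
  qed
qed auto

lemma conj_K8: assumes m: "m \<noteq> 0" shows "inK8 m c k \<Longrightarrow> x \<in> {uone, A8, B8} \<Longrightarrow>
   inK8 m c (umul (umul x k) (uinv x)) \<and> inK8 m c (umul (umul (uinv x) k) x)"
proof (cases k)
  case (U x1 x2 x3 x4 x5 x6 x7 x8 x9 x10)
  assume "inK8 m c k" "x \<in> {uone, A8, B8}"
  moreover obtain t where t: "x6 = m * t" "m dvd x8 + c * t" "x1=0" "x2=0" "x3=0" "x4=0" "x5=0" "x7=0"
    using U m calculation by auto
  moreover have "m dvd x8 + (c * t + m * t)"
  proof -
    have e: "x8 + (c * t + m * t) = (x8 + c * t) + m * t" by simp
    show ?thesis unfolding e using t(2) by (rule dvd_add) simp
  qed
  moreover have "m dvd x8 + (c * t - m * t)"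
  proof -
    have e: "x8 + (c * t - m * t) = (x8 + c * t) - m * t" by simp
    show ?thesis unfolding e using t(2) by (rule dvd_diff) simp
  qed
  ultimately show ?thesis using U m by (auto simp: Edefs algebra_simps)
qed

fun inK9 :: "int \<Rightarrow> int \<Rightarrow> u5 \<Rightarrow> bool" where
  "inK9 m gg (U x1 x2 x3 x4 x5 x6 x7 x8 x9 x10) = (x1=0 \<and> x2=0 \<and> x3=0 \<and> x4=0 \<and> x6=0 \<and> x7=0 \<and>
     m dvd x5 \<and> gg dvd x8)"

lemma subgroup_K9: "subgroup {u. inK9 m gg u} UT"
proof (rule UTg.subgroupI)
  have "inK9 m gg (U 0 0 0 0 0 0 0 0 0 0)" by simp
  then show "{u. inK9 m gg u} \<noteq> {}" by blast
next
  fix a assume "a \<in> {u. inK9 m gg u}" then show "inv\<^bsub>UT\<^esub> a \<in> {u. inK9 m gg u}"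
    by (cases a) (auto simp: Let_def)
next
  fix a b assume "a \<in> {u. inK9 m gg u}" "b \<in> {u. inK9 m gg u}" then show "a \<otimes>\<^bsub>UT\<^esub> b \<in> {u. inK9 m gg u}"
    by (cases a; cases b) auto
qed auto

lemma conj_K9: assumes gm: "gg dvd m" shows "inK9 m gg k \<Longrightarrow> x \<in> {uone, E12, B8} \<Longrightarrow>
   inK9 m gg (umul (umul x k) (uinv x)) \<and> inK9 m gg (umul (umul (uinv x) k) x)"
proof (cases k)
  case (U x1 x2 x3 x4 x5 x6 x7 x8 x9 x10)
  assume "inK9 m gg k" "x \<in> {uone, E12, B8}"
  moreover have "gg dvd x5" using calculation U gm dvd_trans by auto
  ultimately show ?thesis using U by (auto simp: Edefs dvd_simps)
qed

fun inK12 :: "int \<Rightarrow> int \<Rightarrow> u5 \<Rightarrow> bool" where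
  "inK12 m g2 (U x1 x2 x3 x4 x5 x6 x7 x8 x9 x10) = (x1=0 \<and> x2=0 \<and> x3=0 \<and> x4=0 \<and>
     m dvd x5 \<and> m dvd x6 \<and> x6 + x7 = 0 \<and> m dvd x8 \<and> even (x9 - x6) \<and> g2 dvd x10)"

lemma subgroup_K12: assumes g: "g2 dvd m" "g2 dvd 2" shows "subgroup {u. inK12 m g2 u} UT"
proof (rule UTg.subgroupI)
  have "inK12 m g2 (U 0 0 0 0 0 0 0 0 0 0)" by simp
  then show "{u. inK12 m g2 u} \<noteq> {}" by blast
next
  fix a assume a: "a \<in> {u. inK12 m g2 u}" then show "inv\<^bsub>UT\<^esub> a \<in> {u. inK12 m g2 u}"
  proof (cases a)
    case (U x1 x2 x3 x4 x5 x6 x7 x8 x9 x10)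
    then have h: "x1=0" "x2=0" "x3=0" "x4=0" "m dvd x5" "m dvd x6" "x6 + x7 = 0" "m dvd x8"
       "even (x9 - x6)" "g2 dvd x10" using a by auto
    have "g2 dvd x5" using h g dvd_trans by blast
    then have "g2 dvd x5 * x7" by simp
    then have "g2 dvd - x10 + x5 * x7" using h by simp
    moreover have "even (- x9 + x6)" using h(9) by (simp add: algebra_simps)
    ultimately show ?thesis using U h by (simp add: Let_def algebra_simps)
  qed
next
  fix a b assume ab: "a \<in> {u. inK12 m g2 u}" "b \<in> {u. inK12 m g2 u}"
  show "a \<otimes>\<^bsub>UT\<^esub> b \<in> {u. inK12 m g2 u}"
  proof (cases a; cases b)
    fix x1 x2 x3 x4 x5 x6 x7 x8 x9 x10 y1 y2 y3 y4 y5 y6 y7 y8 y9 y10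
    assume a: "a = U x1 x2 x3 x4 x5 x6 x7 x8 x9 x10" and b: "b = U y1 y2 y3 y4 y5 y6 y7 y8 y9 y10"
    have h: "x1=0" "x2=0" "x3=0" "x4=0" "m dvd x5" "m dvd x6" "x6 + x7 = 0" "m dvd x8"
       "even (x9 - x6)" "g2 dvd x10" using a ab by auto
    have h': "y1=0" "y2=0" "y3=0" "y4=0" "m dvd y5" "m dvd y6" "y6 + y7 = 0" "m dvd y8"
       "even (y9 - y6)" "g2 dvd y10" using b ab by auto
    have "g2 dvd x5" using h g dvd_trans by blast
    then have "g2 dvd x10 + y10 + x5 * y7" using h h' by simp
    moreover have "even ((x9 - x6) + (y9 - y6))" using h h' by simp
    ultimately show ?thesis using a b h h' by (simp add: algebra_simps)
  qed
qed auto

lemma conj_K12: assumes g: "g2 dvd m" "g2 dvd 2"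
  shows "inK12 m g2 k \<Longrightarrow> x \<in> {uone, E12, Bb, E34} \<Longrightarrow>
   inK12 m g2 (umul (umul x k) (uinv x)) \<and> inK12 m g2 (umul (umul (uinv x) k) x)"
proof (cases k)
  case (U x1 x2 x3 x4 x5 x6 x7 x8 x9 x10)
  assume k: "inK12 m g2 k" and x: "x \<in> {uone, E12, Bb, E34}"
  have h: "x1=0" "x2=0" "x3=0" "x4=0" "m dvd x5" "m dvd x6" "x6 + x7 = 0" "m dvd x8"
     "even (x9 - x6)" "g2 dvd x10" using k U by auto
  have x7: "x7 = - x6" using h by simp
  have g6: "g2 dvd x6" using h g dvd_trans by blast
  have "g2 dvd x9 - x6" using h(9) g(2) dvd_trans by blast
  then have g9: "g2 dvd x9" using g6 by (metis dvd_add diff_add_cancel)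
  have g8: "g2 dvd x8" using h g dvd_trans by blast
  have m1: "m dvd x8 - x6" "m dvd x8 + x6" "m dvd x8 - x5" "m dvd x8 + x5" using h by simp_all
  have g1: "g2 dvd x10 - x9" "g2 dvd x10 + x9" "g2 dvd x10 - x8" "g2 dvd x10 + x8"
    using h g9 g8 by simp_all
  have e1: "even (x9 - x7 + x6 - x6)" "even (x9 + x7 - x6 - x6)" using h(9) x7
    by (simp_all add: algebra_simps)
  show ?thesis using x U h m1 g1 e1 by (auto simp: Edefs algebra_simps)
qed


definition "gD8 i = (\<lambda>(p::nat,b::bool). if p = i then A8 else if p = i+1 then B8 else uone)"
definition "gD10 i = (\<lambda>(p::nat,b::bool). if b then uone else if p = i then A8 else if p = i+1 then B8 else uone)"
definition "gD9 i = (\<lambda>(p::nat,b::bool). if p = i then E12 else if p = i+1 then B8 else uone)"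
definition "gD11 i = (\<lambda>(p::nat,b::bool). if b then uone else if p = i then E12 else if p = i+1 then B8 else uone)"
definition "gD12 i = (\<lambda>(p::nat,b::bool). if p = i then E12 else if p = i+1 then Bb else if p = i+2 then E34 else uone)"
definition "gD13 i = (\<lambda>(p::nat,b::bool). if b then uone else if p = i then E12 else if p = i+1 then Bb else if p = i+2 then E34 else uone)"

lemma D8_range: "gD8 i q \<in> {uone, A8, B8}" by (auto simp: gD8_def split: prod.splits)
lemma D10_range: "gD10 i q \<in> {uone, A8, B8}" by (auto simp: gD10_def split: prod.splits)
lemma D9_range: "gD9 i q \<in> {uone, E12, B8}" by (auto simp: gD9_def split: prod.splits)
lemma D11_range: "gD11 i q \<in> {uone, E12, B8}" by (auto simp: gD11_def split: prod.splits)
lemma D12_range: "gD12 i q \<in> {uone, E12, Bb, E34}" by (auto simp: gD12_def split: prod.splits)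
lemma D13_range: "gD13 i q \<in> {uone, E12, Bb, E34}" by (auto simp: gD13_def split: prod.splits)

lemma D8_rel: assumes "0 < m2" shows "u \<in> RelImg (gD8 i) n m1 m2 \<Longrightarrow> inK8 (int m2) (int (m2 choose 2)) (ucomm u (gD8 i q))"
  unfolding RelImg_def
  apply (cases q)
  apply (elim UnE CollectE exE conjE)
  using assms m_dvd_2c[of m2]
  apply (auto simp: gD8_def Edefs ucomm_def upow_def Let_def)
  apply (simp_all add: algebra_simps dvd_simps)?
  done

lemma D10_rel: assumes "0 < m1" shows "u \<in> RelImg (gD10 i) n m1 m2 \<Longrightarrow> inK8 (int m1) (int (m1 choose 2)) (ucomm u (gD10 i q))"
  unfolding RelImg_def
  apply (cases q)
  apply (elim UnE CollectE exE conjE)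
  using assms m_dvd_2c[of m1]
  apply (auto simp: gD10_def Edefs ucomm_def upow_def Let_def)
  apply (simp_all add: algebra_simps dvd_simps)?
  done

lemma gcd_facts: "int (gcd m (m choose 2)) dvd int m" "int (gcd m (m choose 2)) dvd int (m choose 2)"
  by (simp_all add: int_dvd_int_iff)

lemma D9_rel: shows "u \<in> RelImg (gD9 i) n m1 m2 \<Longrightarrow> inK9 (int m2) (int (gcd m2 (m2 choose 2))) (ucomm u (gD9 i q))"
  unfolding RelImg_def
  apply (cases q)
  apply (elim UnE CollectE exE conjE)
  using gcd_facts[of m2]
  apply (auto simp: gD9_def Edefs ucomm_def upow_def Let_def)
  apply (simp_all add: algebra_simps dvd_simps)?
  done

lemma D11_rel: shows "u \<in> RelImg (gD11 i) n m1 m2 \<Longrightarrow> inK9 (int m1) (int (gcd m1 (m1 choose 2))) (ucomm u (gD11 i q))"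
  unfolding RelImg_def
  apply (cases q)
  apply (elim UnE CollectE exE conjE)
  using gcd_facts[of m1]
  apply (auto simp: gD11_def Edefs ucomm_def upow_def Let_def)
  apply (simp_all add: algebra_simps dvd_simps)?
  done

lemma gcd2_facts: "int (gcd 2 m) dvd int m" "int (gcd 2 m) dvd 2"
  by (simp add: int_dvd_int_iff) (metis gcd_dvd1 int_dvd_int_iff of_nat_numeral)

lemma D12_rel: shows "u \<in> RelImg (gD12 i) n m1 m2 \<Longrightarrow> inK12 (int m2) (int (gcd 2 m2)) (ucomm u (gD12 i q))"
  unfolding RelImg_def
  apply (cases q)
  apply (elim UnE CollectE exE conjE)
  using gcd2_facts[of m2]
  apply (auto simp: gD12_def Edefs ucomm_def upow_def Let_def)
  apply (simp_all add: algebra_simps dvd_simps)?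
  done

lemma D13_rel: shows "u \<in> RelImg (gD13 i) n m1 m2 \<Longrightarrow> inK12 (int m1) (int (gcd 2 m1)) (ucomm u (gD13 i q))"
  unfolding RelImg_def
  apply (cases q)
  apply (elim UnE CollectE exE conjE)
  using gcd2_facts[of m1]
  apply (auto simp: gD13_def Edefs ucomm_def upow_def Let_def)
  apply (simp_all add: algebra_simps dvd_simps)?
  done


definition "gD1 i = gen4 i i E12 E24 uone uone"

lemma D1_range: "gD1 i q \<in> {uone, E12, E24, E13, E34, E2434}"
  unfolding gD1_def by (rule gen4_range) auto

lemma D1_rel: assumes d: "m1 dvd m2" shows "u \<in> RelImg (gD1 i) n m1 m2 \<Longrightarrow> inK2 (int m1) (ucomm u (gD1 i q))"
  unfolding RelImg_def
  apply (cases q)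
  apply (elim UnE CollectE exE conjE)
  using d
  apply (auto simp: gD1_def gen4_def Edefs ucomm_def upow_def Let_def)
  apply (simp_all add: algebra_simps dvd_simps)?
  done

lemma D1_kill: assumes t: "t \<in> set (tags n)" and tt: "t \<noteq> T1 i" shows "inK2 (int m1) (eltI (gD1 i) t)"
  using tags_valid[OF t] tt by (cases t) (auto simp: gD1_def gen4_def Edefs ucomm_def Let_def)

lemma D1_tgt: shows "eltI (gD1 i) (T1 i) = U 0 0 0 0 0 0 0 1 0 0"
  by (simp add: gD1_def gen4_def Edefs ucomm_def)

definition "gD2 i j = gen4 i j E12 E12 E24 E24"

lemma D2_range: "gD2 i j q \<in> {uone, E12, E24, E13, E34, E2434}"
  unfolding gD2_def by (rule gen4_range) auto

lemma D2_rel: assumes d: "m1 dvd m2" shows "u \<in> RelImg (gD2 i j) n m1 m2 \<Longrightarrow> inK2 (int m2) (ucomm u (gD2 i j q))"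
  unfolding RelImg_def
  apply (cases q)
  apply (elim UnE CollectE exE conjE)
  using d
  apply (auto simp: gD2_def gen4_def Edefs ucomm_def upow_def Let_def)
  apply (simp_all add: algebra_simps dvd_simps)?
  done

lemma D2_kill: assumes c: "i + 2 \<le> j" and t: "t \<in> set (tags n)" and tt: "t \<noteq> T2 i j" shows "inK2 (int m2) (eltI (gD2 i j) t)"
  using tags_valid[OF t] tt c by (cases t) (auto simp: gD2_def gen4_def Edefs ucomm_def Let_def)

lemma D2_tgt: assumes c: "i + 2 \<le> j" shows "eltI (gD2 i j) (T2 i j) = U 0 0 0 0 0 0 0 1 0 0"
  using c by (simp add: gD2_def gen4_def Edefs ucomm_def)

definition "gD3 i j = gen4 i j E12 E13 E34 E2434"

lemma D3_range: "gD3 i j q \<in> {uone, E12, E24, E13, E34, E2434}"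
  unfolding gD3_def by (rule gen4_range) auto

lemma D3_rel: assumes d: "m1 dvd m2" shows "u \<in> RelImg (gD3 i j) n m1 m2 \<Longrightarrow> inK2 (int m1) (ucomm u (gD3 i j q))"
  unfolding RelImg_def
  apply (cases q)
  apply (elim UnE CollectE exE conjE)
  using d
  apply (auto simp: gD3_def gen4_def Edefs ucomm_def upow_def Let_def)
  apply (simp_all add: algebra_simps dvd_simps)?
  done

lemma D3_kill: assumes c: "i + 2 \<le> j" and t: "t \<in> set (tags n)" and tt: "t \<noteq> T3 i j" shows "inK2 (int m1) (eltI (gD3 i j) t)"
  using tags_valid[OF t] tt c by (cases t) (auto simp: gD3_def gen4_def Edefs ucomm_def Let_def)

lemma D3_tgt: assumes c: "i + 2 \<le> j" shows "eltI (gD3 i j) (T3 i j) = U 0 0 0 0 0 0 0 1 0 0"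
  using c by (simp add: gD3_def gen4_def Edefs ucomm_def)

definition "gD4 i j = gen4 i j uone E12 E24 uone"

lemma D4_range: "gD4 i j q \<in> {uone, E12, E24, E13, E34, E2434}"
  unfolding gD4_def by (rule gen4_range) auto

lemma D4_rel: assumes d: "m1 dvd m2" shows "u \<in> RelImg (gD4 i j) n m1 m2 \<Longrightarrow> inK2 (int m1) (ucomm u (gD4 i j q))"
  unfolding RelImg_def
  apply (cases q)
  apply (elim UnE CollectE exE conjE)
  using d
  apply (auto simp: gD4_def gen4_def Edefs ucomm_def upow_def Let_def)
  apply (simp_all add: algebra_simps dvd_simps)?
  done

lemma D4_kill: assumes c: "i + 2 \<le> j" and t: "t \<in> set (tags n)" and tt: "t \<noteq> T4 i j" shows "inK2 (int m1) (eltI (gD4 i j) t)"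
  using tags_valid[OF t] tt c by (cases t) (auto simp: gD4_def gen4_def Edefs ucomm_def Let_def)

lemma D4_tgt: assumes c: "i + 2 \<le> j" shows "eltI (gD4 i j) (T4 i j) = U 0 0 0 0 0 0 0 1 0 0"
  using c by (simp add: gD4_def gen4_def Edefs ucomm_def)

definition "gD5 i j = gen4 i j E12 uone uone E24"

lemma D5_range: "gD5 i j q \<in> {uone, E12, E24, E13, E34, E2434}"
  unfolding gD5_def by (rule gen4_range) auto

lemma D5_rel: assumes d: "m1 dvd m2" shows "u \<in> RelImg (gD5 i j) n m1 m2 \<Longrightarrow> inK2 (int m1) (ucomm u (gD5 i j q))"
  unfolding RelImg_def
  apply (cases q)
  apply (elim UnE CollectE exE conjE)
  using d
  apply (auto simp: gD5_def gen4_def Edefs ucomm_def upow_def Let_def)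
  apply (simp_all add: algebra_simps dvd_simps)?
  done

lemma D5_kill: assumes c: "i + 2 \<le> j" and t: "t \<in> set (tags n)" and tt: "t \<noteq> T5 i j" shows "inK2 (int m1) (eltI (gD5 i j) t)"
  using tags_valid[OF t] tt c by (cases t) (auto simp: gD5_def gen4_def Edefs ucomm_def Let_def)

lemma D5_tgt: assumes c: "i + 2 \<le> j" shows "eltI (gD5 i j) (T5 i j) = U 0 0 0 0 0 0 0 1 0 0"
  using c by (simp add: gD5_def gen4_def Edefs ucomm_def)

definition "gD6 i = gen4 i (i+1) E12 uone uone E24"

lemma D6_range: "gD6 i q \<in> {uone, E12, E24, E13, E34, E2434}"
  unfolding gD6_def by (rule gen4_range) auto

lemma D6_rel: assumes d: "m1 dvd m2" shows "u \<in> RelImg (gD6 i) n m1 m2 \<Longrightarrow> inK2 (int m1) (ucomm u (gD6 i q))"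
  unfolding RelImg_def
  apply (cases q)
  apply (elim UnE CollectE exE conjE)
  using d
  apply (auto simp: gD6_def gen4_def Edefs ucomm_def upow_def Let_def)
  apply (simp_all add: algebra_simps dvd_simps)?
  done

lemma D6_kill: assumes t: "t \<in> set (tags n)" and tt: "t \<noteq> T6 i" shows "inK2 (int m1) (eltI (gD6 i) t)"
  using tags_valid[OF t] tt by (cases t) (auto simp: gD6_def gen4_def Edefs ucomm_def Let_def)

lemma D6_tgt: shows "eltI (gD6 i) (T6 i) = U 0 0 0 0 0 0 0 1 0 0"
  by (simp add: gD6_def gen4_def Edefs ucomm_def)

definition "gD7 i = gen4 i (i+1) uone E12 uone E24"

lemma D7_range: "gD7 i q \<in> {uone, E12, E24, E13, E34, E2434}"
  unfolding gD7_def by (rule gen4_range) auto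

lemma D7_rel: assumes d: "m1 dvd m2" shows "u \<in> RelImg (gD7 i) n m1 m2 \<Longrightarrow> inK2 (int m1) (ucomm u (gD7 i q))"
  unfolding RelImg_def
  apply (cases q)
  apply (elim UnE CollectE exE conjE)
  using d
  apply (auto simp: gD7_def gen4_def Edefs ucomm_def upow_def Let_def)
  apply (simp_all add: algebra_simps dvd_simps)?
  done

lemma D7_kill: assumes t: "t \<in> set (tags n)" and tt: "t \<noteq> T7 i" shows "inK2 (int m1) (eltI (gD7 i) t)"
  using tags_valid[OF t] tt by (cases t) (auto simp: gD7_def gen4_def Edefs ucomm_def Let_def)

lemma D7_tgt: shows "eltI (gD7 i) (T7 i) = U 0 0 0 0 0 0 0 1 0 0"
  by (simp add: gD7_def gen4_def Edefs ucomm_def)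


lemma D8_kill: assumes c: "0 < m2" and t: "t \<in> set (tags n)" and tt: "t \<notin> {T8 i}" shows "inK8 (int m2) (int (m2 choose 2)) (eltI (gD8 i) t)"
  using tags_valid[OF t] tt c by (cases t) (auto simp: gD8_def Edefs ucomm_def Let_def)

lemma D8_tgt0: "eltI (gD8 i) (T8 i) = U 0 0 0 0 0 0 0 (-1) 0 0"
  by (simp add: gD8_def Edefs ucomm_def)

lemma D10_kill: assumes c: "0 < m1" and t: "t \<in> set (tags n)" and tt: "t \<notin> {T8 i, T10 i}" shows "inK8 (int m1) (int (m1 choose 2)) (eltI (gD10 i) t)"
  using tags_valid[OF t] tt c by (cases t) (auto simp: gD10_def Edefs ucomm_def Let_def)

lemma D10_tgt0: "eltI (gD10 i) (T8 i) = U 0 0 0 0 0 0 0 (-1) 0 0"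
  by (simp add: gD10_def Edefs ucomm_def)

lemma D10_tgt1: "eltI (gD10 i) (T10 i) = U 0 0 0 0 0 0 0 1 0 0"
  by (simp add: gD10_def Edefs ucomm_def)

lemma D9_kill: assumes t: "t \<in> set (tags n)" and tt: "t \<notin> {T9 i}" shows "inK9 (int m2) (int (gcd m2 (m2 choose 2))) (eltI (gD9 i) t)"
  using tags_valid[OF t] tt by (cases t) (auto simp: gD9_def Edefs ucomm_def Let_def)

lemma D9_tgt0: "eltI (gD9 i) (T9 i) = U 0 0 0 0 0 0 0 1 0 0"
  by (simp add: gD9_def Edefs ucomm_def)

lemma D11_kill: assumes t: "t \<in> set (tags n)" and tt: "t \<notin> {T9 i, T11 i}" shows "inK9 (int m1) (int (gcd m1 (m1 choose 2))) (eltI (gD11 i) t)"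
  using tags_valid[OF t] tt by (cases t) (auto simp: gD11_def Edefs ucomm_def Let_def)

lemma D11_tgt0: "eltI (gD11 i) (T9 i) = U 0 0 0 0 0 0 0 1 0 0"
  by (simp add: gD11_def Edefs ucomm_def)

lemma D11_tgt1: "eltI (gD11 i) (T11 i) = U 0 0 0 0 0 0 0 1 0 0"
  by (simp add: gD11_def Edefs ucomm_def)

lemma D12_kill: assumes t: "t \<in> set (tags n)" and tt: "t \<notin> {T12 i}" shows "inK12 (int m2) (int (gcd 2 m2)) (eltI (gD12 i) t)"
  using tags_valid[OF t] tt by (cases t) (auto simp: gD12_def Edefs ucomm_def Let_def)

lemma D12_tgt0: "eltI (gD12 i) (T12 i) = U 0 0 0 0 0 0 0 0 0 1"
  by (simp add: gD12_def Edefs ucomm_def)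

lemma D13_kill: assumes t: "t \<in> set (tags n)" and tt: "t \<notin> {T12 i, T13 i}" shows "inK12 (int m1) (int (gcd 2 m1)) (eltI (gD13 i) t)"
  using tags_valid[OF t] tt by (cases t) (auto simp: gD13_def Edefs ucomm_def Let_def)

lemma D13_tgt0: "eltI (gD13 i) (T12 i) = U 0 0 0 0 0 0 0 0 0 1"
  by (simp add: gD13_def Edefs ucomm_def)

lemma D13_tgt1: "eltI (gD13 i) (T13 i) = U 0 0 0 0 0 0 0 0 0 (-1)"
  by (simp add: gD13_def Edefs ucomm_def)


lemma upow_simple: "upow m (U 0 0 0 0 0 0 0 a b c) = U 0 0 0 0 0 0 0 (int m * a) (int m * b) (int m * c)"
  by (simp add: upow_def)

lemma upow_int: "U 0 0 0 0 0 0 0 a b c [^]\<^bsub>UT\<^esub> (z::int) = U 0 0 0 0 0 0 0 (z * a) (z * b) (z * c)"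
  by (simp add: int_pow_def2 upow_simple Let_def)

lemma umul_simple: "umul (U 0 0 0 0 0 0 0 a b c) (U 0 0 0 0 0 0 0 a2 b2 c2) = U 0 0 0 0 0 0 0 (a + a2) (b + b2) (c + c2)"
  by simp

lemma filter_single: "distinct ps \<Longrightarrow> k \<in> set ps \<Longrightarrow> filter (\<lambda>k'. k' = k) ps = [k]"
  by (induction ps) (auto simp: filter_empty_conv)

lemma filter_pair: "distinct ps \<Longrightarrow> k \<in> set ps \<Longrightarrow> k2 \<in> set ps \<Longrightarrow> k \<noteq> k2 \<Longrightarrow>
   filter (\<lambda>k'. k' = k \<or> k' = k2) ps = [k, k2] \<or> filter (\<lambda>k'. k' = k \<or> k' = k2) ps = [k2, k]"
proof (induction ps)
  case Nil then show ?case by simp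
next
  case (Cons a ps)
  show ?case
  proof (cases "a = k")
    case True
    then have "k2 \<in> set ps" "k \<notin> set ps" using Cons.prems by auto
    then have "filter (\<lambda>k'. k' = k \<or> k' = k2) ps = [k2]" using Cons.prems(1)
      by (induction ps) (auto simp: filter_empty_conv)
    then show ?thesis using True by simp
  next
    case False
    show ?thesis
    proof (cases "a = k2")
      case True
      then have "k \<in> set ps" "k2 \<notin> set ps" using Cons.prems by auto
      then have "filter (\<lambda>k'. k' = k \<or> k' = k2) ps = [k]" using Cons.prems(1)
        by (induction ps) (auto simp: filter_empty_conv)
      then show ?thesis using True by simp
    next
      case False2: False
      then show ?thesis using Cons False by auto
    qed
  qed
qed

lemma choose2_mult: "int ((a * q) choose 2) = int q * int (a choose 2) + int a * int a * int (q choose 2)"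
proof -
  have "2 * int ((a * q) choose 2) = 2 * (int q * int (a choose 2) + int a * int a * int (q choose 2))"
  proof -
    have h1: "2 * int ((a * q) choose 2) = int a * int q * (int a * int q - 1)"
      using int_two_choose2[of "a * q"] by simp
    have h2: "2 * int (a choose 2) = int a * (int a - 1)" by (rule int_two_choose2)
    have h3: "2 * int (q choose 2) = int q * (int q - 1)" by (rule int_two_choose2)
    have "2 * (int q * int (a choose 2) + int a * int a * int (q choose 2))
        = int q * (2 * int (a choose 2)) + int a * int a * (2 * int (q choose 2))" by (simp add: algebra_simps)
    also have "\<dots> = int q * (int a * (int a - 1)) + int a * int a * (int q * (int q - 1))" by (simp only: h2 h3)
    also have "\<dots> = int a * int q * (int a * int q - 1)" by (simp add: algebra_simps)
    finally show ?thesis using h1 by simp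
  qed
  then show ?thesis by simp
qed

lemma gcd_choose_dvd: assumes "m1 dvd m2" shows "gcd m1 (m1 choose 2) dvd gcd m2 (m2 choose 2)"
proof -
  obtain q where q: "m2 = m1 * q" using assms by blast
  let ?g = "gcd m1 (m1 choose 2)"
  have a1: "int ?g dvd int q * int (m1 choose 2)" by (rule dvd_mult) (simp add: int_dvd_int_iff)
  have a2: "int ?g dvd int m1 * int m1 * int (q choose 2)" by (intro dvd_mult2) (simp add: int_dvd_int_iff)
  have "int ?g dvd int q * int (m1 choose 2) + int m1 * int m1 * int (q choose 2)"
    using a1 a2 by (rule dvd_add)
  then have "int ?g dvd int (m2 choose 2)" using q choose2_mult by simp
  then have "?g dvd m2 choose 2" by (simp add: int_dvd_int_iff)
  moreover have "?g dvd m2" using assms dvd_trans by blast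
  ultimately show ?thesis by simp
qed

lemma gcd2_dvd: assumes "m1 dvd m2" shows "gcd 2 m1 dvd gcd (2::nat) m2"
  using assms by (meson dvd_trans gcd_dvd1 gcd_dvd2 gcd_greatest)

lemma tags_mem: "1 \<le> i \<Longrightarrow> i \<le> n - 2 \<Longrightarrow> T8 i \<in> set (tags n)"
  "1 \<le> i \<Longrightarrow> i \<le> n - 2 \<Longrightarrow> T9 i \<in> set (tags n)"
  "1 \<le> i \<Longrightarrow> i \<le> n - 3 \<Longrightarrow> T12 i \<in> set (tags n)"
  by (auto simp: tags_def)

locale setting =
  fixes n m1 m2 :: nat and ps :: "nat list" and e :: "nat \<Rightarrow> int"
  assumes m1: "0 < m1" and m2: "0 < m2" and d: "m1 dvd m2"
    and dps: "distinct ps" and sps: "set ps = {..<length (tags n)}"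
    and hyp: "list_prod (FF n) (map (\<lambda>k. fst (elem_list n m1 m2 ! k) [^]\<^bsub>FF n\<^esub> (e k :: int)) ps)
           \<in> comm_subgroup (FF n) (RR n m1 m2) (carrier (FF n))"
begin

lemma single:
  assumes sK: "subgroup K UT"
    and cg: "\<And>p k. k \<in> K \<Longrightarrow> umul (umul (g p) k) (uinv (g p)) \<in> K"
    and cg': "\<And>p k. k \<in> K \<Longrightarrow> umul (umul (uinv (g p)) k) (g p) \<in> K"
    and rel: "\<And>u q. u \<in> RelImg g n m1 m2 \<Longrightarrow> ucomm u (g q) \<in> K"
    and k: "k < length (tags n)"
    and kill: "\<And>t. t \<in> set (tags n) \<Longrightarrow> t \<noteq> tags n ! k \<Longrightarrow> eltI g t \<in> K"
  shows "eltI g (tags n ! k) [^]\<^bsub>UT\<^esub> e k \<in> K"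
proof -
  have kill': "k' < length (tags n) \<Longrightarrow> \<not> (k' = k) \<Longrightarrow> eltI g (tags n ! k') \<in> K" for k'
    using kill k distinct_tags[of n] by (simp add: nth_eq_iff_index_eq)
  have "foldr umul (map (\<lambda>k. eltI g (tags n ! k) [^]\<^bsub>UT\<^esub> e k) (filter (\<lambda>k'. k' = k) ps)) uone \<in> K"
    by (rule apply_design[where K=K and g=g, OF sK cg cg' rel hyp sps kill'])
  moreover have "filter (\<lambda>k'. k' = k) ps = [k]" using dps sps k by (simp add: filter_single)
  ultimately show ?thesis by simp
qed

lemma pair:
  assumes sK: "subgroup K UT"
    and cg: "\<And>p k. k \<in> K \<Longrightarrow> umul (umul (g p) k) (uinv (g p)) \<in> K"
    and cg': "\<And>p k. k \<in> K \<Longrightarrow> umul (umul (uinv (g p)) k) (g p) \<in> K"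
    and rel: "\<And>u q. u \<in> RelImg g n m1 m2 \<Longrightarrow> ucomm u (g q) \<in> K"
    and k: "k < length (tags n)" and k2: "k2 < length (tags n)" and kk: "k \<noteq> k2"
    and kill: "\<And>t. t \<in> set (tags n) \<Longrightarrow> t \<noteq> tags n ! k \<Longrightarrow> t \<noteq> tags n ! k2 \<Longrightarrow> eltI g t \<in> K"
  shows "umul (eltI g (tags n ! k) [^]\<^bsub>UT\<^esub> e k) (eltI g (tags n ! k2) [^]\<^bsub>UT\<^esub> e k2) \<in> K \<or>
         umul (eltI g (tags n ! k2) [^]\<^bsub>UT\<^esub> e k2) (eltI g (tags n ! k) [^]\<^bsub>UT\<^esub> e k) \<in> K"
proof -
  have kill': "k' < length (tags n) \<Longrightarrow> \<not> (k' = k \<or> k' = k2) \<Longrightarrow> eltI g (tags n ! k') \<in> K" for k'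
    using kill k k2 distinct_tags[of n] by (simp add: nth_eq_iff_index_eq)
  have "foldr umul (map (\<lambda>k. eltI g (tags n ! k) [^]\<^bsub>UT\<^esub> e k) (filter (\<lambda>k'. k' = k \<or> k' = k2) ps)) uone \<in> K"
    by (rule apply_design[where K=K and g=g, OF sK cg cg' rel hyp sps kill'])
  moreover have "filter (\<lambda>k'. k' = k \<or> k' = k2) ps = [k, k2] \<or> filter (\<lambda>k'. k' = k \<or> k' = k2) ps = [k2, k]"
    using dps sps k k2 kk by (intro filter_pair) auto
  ultimately show ?thesis by auto
qed

lemma res_D1: assumes k: "k < length (tags n)" and t: "tags n ! k = T1 i" shows "int m1 dvd e k"
proof -
  let ?K = "{u. inK2 (int m1) u}"
  have cg: "\<And>p x. x \<in> ?K \<Longrightarrow> umul (umul (gD1 i p) x) (uinv (gD1 i p)) \<in> ?K"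
    using conj_K2 D1_range by blast
  have cg': "\<And>p x. x \<in> ?K \<Longrightarrow> umul (umul (uinv (gD1 i p)) x) (gD1 i p) \<in> ?K"
    using conj_K2 D1_range by blast
  have rel: "\<And>u q. u \<in> RelImg (gD1 i) n m1 m2 \<Longrightarrow> ucomm u (gD1 i q) \<in> ?K"
    using D1_rel[OF d] by blast
  have kill: "\<And>t'. t' \<in> set (tags n) \<Longrightarrow> t' \<noteq> tags n ! k \<Longrightarrow> eltI (gD1 i) t' \<in> ?K"
    using D1_kill t by auto
  have "eltI (gD1 i) (tags n ! k) [^]\<^bsub>UT\<^esub> e k \<in> ?K"
    by (rule single[OF subgroup_K2 cg cg' rel k kill])
  then show ?thesis unfolding t D1_tgt upow_int by simp
qed

lemma res_D2: assumes k: "k < length (tags n)" and t: "tags n ! k = T2 i j" shows "int m2 dvd e k"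
proof -
    have c: "i + 2 \<le> j" using tags_valid[OF nth_mem[OF k]] t by simp
  let ?K = "{u. inK2 (int m2) u}"
  have cg: "\<And>p x. x \<in> ?K \<Longrightarrow> umul (umul (gD2 i j p) x) (uinv (gD2 i j p)) \<in> ?K"
    using conj_K2 D2_range by blast
  have cg': "\<And>p x. x \<in> ?K \<Longrightarrow> umul (umul (uinv (gD2 i j p)) x) (gD2 i j p) \<in> ?K"
    using conj_K2 D2_range by blast
  have rel: "\<And>u q. u \<in> RelImg (gD2 i j) n m1 m2 \<Longrightarrow> ucomm u (gD2 i j q) \<in> ?K"
    using D2_rel[OF d] by blast
  have kill: "\<And>t'. t' \<in> set (tags n) \<Longrightarrow> t' \<noteq> tags n ! k \<Longrightarrow> eltI (gD2 i j) t' \<in> ?K"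
    using D2_kill[OF c] t by auto
  have "eltI (gD2 i j) (tags n ! k) [^]\<^bsub>UT\<^esub> e k \<in> ?K"
    by (rule single[OF subgroup_K2 cg cg' rel k kill])
  then show ?thesis unfolding t D2_tgt[OF c] upow_int by simp
qed

lemma res_D3: assumes k: "k < length (tags n)" and t: "tags n ! k = T3 i j" shows "int m1 dvd e k"
proof -
    have c: "i + 2 \<le> j" using tags_valid[OF nth_mem[OF k]] t by simp
  let ?K = "{u. inK2 (int m1) u}"
  have cg: "\<And>p x. x \<in> ?K \<Longrightarrow> umul (umul (gD3 i j p) x) (uinv (gD3 i j p)) \<in> ?K"
    using conj_K2 D3_range by blast
  have cg': "\<And>p x. x \<in> ?K \<Longrightarrow> umul (umul (uinv (gD3 i j p)) x) (gD3 i j p) \<in> ?K"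
    using conj_K2 D3_range by blast
  have rel: "\<And>u q. u \<in> RelImg (gD3 i j) n m1 m2 \<Longrightarrow> ucomm u (gD3 i j q) \<in> ?K"
    using D3_rel[OF d] by blast
  have kill: "\<And>t'. t' \<in> set (tags n) \<Longrightarrow> t' \<noteq> tags n ! k \<Longrightarrow> eltI (gD3 i j) t' \<in> ?K"
    using D3_kill[OF c] t by auto
  have "eltI (gD3 i j) (tags n ! k) [^]\<^bsub>UT\<^esub> e k \<in> ?K"
    by (rule single[OF subgroup_K2 cg cg' rel k kill])
  then show ?thesis unfolding t D3_tgt[OF c] upow_int by simp
qed

lemma res_D4: assumes k: "k < length (tags n)" and t: "tags n ! k = T4 i j" shows "int m1 dvd e k"
proof -
    have c: "i + 2 \<le> j" using tags_valid[OF nth_mem[OF k]] t by simp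
  let ?K = "{u. inK2 (int m1) u}"
  have cg: "\<And>p x. x \<in> ?K \<Longrightarrow> umul (umul (gD4 i j p) x) (uinv (gD4 i j p)) \<in> ?K"
    using conj_K2 D4_range by blast
  have cg': "\<And>p x. x \<in> ?K \<Longrightarrow> umul (umul (uinv (gD4 i j p)) x) (gD4 i j p) \<in> ?K"
    using conj_K2 D4_range by blast
  have rel: "\<And>u q. u \<in> RelImg (gD4 i j) n m1 m2 \<Longrightarrow> ucomm u (gD4 i j q) \<in> ?K"
    using D4_rel[OF d] by blast
  have kill: "\<And>t'. t' \<in> set (tags n) \<Longrightarrow> t' \<noteq> tags n ! k \<Longrightarrow> eltI (gD4 i j) t' \<in> ?K"
    using D4_kill[OF c] t by auto
  have "eltI (gD4 i j) (tags n ! k) [^]\<^bsub>UT\<^esub> e k \<in> ?K"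
    by (rule single[OF subgroup_K2 cg cg' rel k kill])
  then show ?thesis unfolding t D4_tgt[OF c] upow_int by simp
qed

lemma res_D5: assumes k: "k < length (tags n)" and t: "tags n ! k = T5 i j" shows "int m1 dvd e k"
proof -
    have c: "i + 2 \<le> j" using tags_valid[OF nth_mem[OF k]] t by simp
  let ?K = "{u. inK2 (int m1) u}"
  have cg: "\<And>p x. x \<in> ?K \<Longrightarrow> umul (umul (gD5 i j p) x) (uinv (gD5 i j p)) \<in> ?K"
    using conj_K2 D5_range by blast
  have cg': "\<And>p x. x \<in> ?K \<Longrightarrow> umul (umul (uinv (gD5 i j p)) x) (gD5 i j p) \<in> ?K"
    using conj_K2 D5_range by blast
  have rel: "\<And>u q. u \<in> RelImg (gD5 i j) n m1 m2 \<Longrightarrow> ucomm u (gD5 i j q) \<in> ?K"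
    using D5_rel[OF d] by blast
  have kill: "\<And>t'. t' \<in> set (tags n) \<Longrightarrow> t' \<noteq> tags n ! k \<Longrightarrow> eltI (gD5 i j) t' \<in> ?K"
    using D5_kill[OF c] t by auto
  have "eltI (gD5 i j) (tags n ! k) [^]\<^bsub>UT\<^esub> e k \<in> ?K"
    by (rule single[OF subgroup_K2 cg cg' rel k kill])
  then show ?thesis unfolding t D5_tgt[OF c] upow_int by simp
qed

lemma res_D6: assumes k: "k < length (tags n)" and t: "tags n ! k = T6 i" shows "int m1 dvd e k"
proof -
  let ?K = "{u. inK2 (int m1) u}"
  have cg: "\<And>p x. x \<in> ?K \<Longrightarrow> umul (umul (gD6 i p) x) (uinv (gD6 i p)) \<in> ?K"
    using conj_K2 D6_range by blast
  have cg': "\<And>p x. x \<in> ?K \<Longrightarrow> umul (umul (uinv (gD6 i p)) x) (gD6 i p) \<in> ?K"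
    using conj_K2 D6_range by blast
  have rel: "\<And>u q. u \<in> RelImg (gD6 i) n m1 m2 \<Longrightarrow> ucomm u (gD6 i q) \<in> ?K"
    using D6_rel[OF d] by blast
  have kill: "\<And>t'. t' \<in> set (tags n) \<Longrightarrow> t' \<noteq> tags n ! k \<Longrightarrow> eltI (gD6 i) t' \<in> ?K"
    using D6_kill t by auto
  have "eltI (gD6 i) (tags n ! k) [^]\<^bsub>UT\<^esub> e k \<in> ?K"
    by (rule single[OF subgroup_K2 cg cg' rel k kill])
  then show ?thesis unfolding t D6_tgt upow_int by simp
qed

lemma res_D7: assumes k: "k < length (tags n)" and t: "tags n ! k = T7 i" shows "int m1 dvd e k"
proof -
  let ?K = "{u. inK2 (int m1) u}"
  have cg: "\<And>p x. x \<in> ?K \<Longrightarrow> umul (umul (gD7 i p) x) (uinv (gD7 i p)) \<in> ?K"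
    using conj_K2 D7_range by blast
  have cg': "\<And>p x. x \<in> ?K \<Longrightarrow> umul (umul (uinv (gD7 i p)) x) (gD7 i p) \<in> ?K"
    using conj_K2 D7_range by blast
  have rel: "\<And>u q. u \<in> RelImg (gD7 i) n m1 m2 \<Longrightarrow> ucomm u (gD7 i q) \<in> ?K"
    using D7_rel[OF d] by blast
  have kill: "\<And>t'. t' \<in> set (tags n) \<Longrightarrow> t' \<noteq> tags n ! k \<Longrightarrow> eltI (gD7 i) t' \<in> ?K"
    using D7_kill t by auto
  have "eltI (gD7 i) (tags n ! k) [^]\<^bsub>UT\<^esub> e k \<in> ?K"
    by (rule single[OF subgroup_K2 cg cg' rel k kill])
  then show ?thesis unfolding t D7_tgt upow_int by simp
qed


lemma res_D8: assumes k: "k < length (tags n)" and t: "tags n ! k = T8 i" shows "int m2 dvd e k"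
proof -
  have m: "int m2 \<noteq> 0" using m2 by simp
  let ?K = "{u. inK8 (int m2) (int (m2 choose 2)) u}"
  have cg: "\<And>p x. x \<in> ?K \<Longrightarrow> umul (umul (gD8 i p) x) (uinv (gD8 i p)) \<in> ?K"
    using conj_K8[OF m] D8_range by blast
  have cg': "\<And>p x. x \<in> ?K \<Longrightarrow> umul (umul (uinv (gD8 i p)) x) (gD8 i p) \<in> ?K"
    using conj_K8[OF m] D8_range by blast
  have rel: "\<And>u q. u \<in> RelImg (gD8 i) n m1 m2 \<Longrightarrow> ucomm u (gD8 i q) \<in> ?K"
    using D8_rel[OF m2] by blast
  have kill: "\<And>t'. t' \<in> set (tags n) \<Longrightarrow> t' \<noteq> tags n ! k \<Longrightarrow> eltI (gD8 i) t' \<in> ?K"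
    using D8_kill[OF m2] t by auto
  have "eltI (gD8 i) (tags n ! k) [^]\<^bsub>UT\<^esub> e k \<in> ?K"
    by (rule single[OF subgroup_K8[OF m] cg cg' rel k kill])
  then show ?thesis unfolding t D8_tgt0 upow_int by simp
qed

lemma res_D9: assumes k: "k < length (tags n)" and t: "tags n ! k = T9 i" shows "int (gcd m2 (m2 choose 2)) dvd e k"
proof -
  let ?K = "{u. inK9 (int m2) (int (gcd m2 (m2 choose 2))) u}"
  have cg: "\<And>p x. x \<in> ?K \<Longrightarrow> umul (umul (gD9 i p) x) (uinv (gD9 i p)) \<in> ?K"
    using conj_K9[OF gcd_facts(1)] D9_range by blast
  have cg': "\<And>p x. x \<in> ?K \<Longrightarrow> umul (umul (uinv (gD9 i p)) x) (gD9 i p) \<in> ?K"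
    using conj_K9[OF gcd_facts(1)] D9_range by blast
  have rel: "\<And>u q. u \<in> RelImg (gD9 i) n m1 m2 \<Longrightarrow> ucomm u (gD9 i q) \<in> ?K"
    using D9_rel by blast
  have kill: "\<And>t'. t' \<in> set (tags n) \<Longrightarrow> t' \<noteq> tags n ! k \<Longrightarrow> eltI (gD9 i) t' \<in> ?K"
    using D9_kill t by auto
  have "eltI (gD9 i) (tags n ! k) [^]\<^bsub>UT\<^esub> e k \<in> ?K"
    by (rule single[OF subgroup_K9 cg cg' rel k kill])
  then show ?thesis unfolding t D9_tgt0 upow_int by simp
qed

lemma res_D12: assumes k: "k < length (tags n)" and t: "tags n ! k = T12 i" shows "int (gcd 2 m2) dvd e k"
proof -
  let ?K = "{u. inK12 (int m2) (int (gcd 2 m2)) u}"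
  have cg: "\<And>p x. x \<in> ?K \<Longrightarrow> umul (umul (gD12 i p) x) (uinv (gD12 i p)) \<in> ?K"
    using conj_K12[OF gcd2_facts] D12_range by blast
  have cg': "\<And>p x. x \<in> ?K \<Longrightarrow> umul (umul (uinv (gD12 i p)) x) (gD12 i p) \<in> ?K"
    using conj_K12[OF gcd2_facts] D12_range by blast
  have rel: "\<And>u q. u \<in> RelImg (gD12 i) n m1 m2 \<Longrightarrow> ucomm u (gD12 i q) \<in> ?K"
    using D12_rel by blast
  have kill: "\<And>t'. t' \<in> set (tags n) \<Longrightarrow> t' \<noteq> tags n ! k \<Longrightarrow> eltI (gD12 i) t' \<in> ?K"
    using D12_kill t by auto
  have "eltI (gD12 i) (tags n ! k) [^]\<^bsub>UT\<^esub> e k \<in> ?K"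
    by (rule single[OF subgroup_K12[OF gcd2_facts] cg cg' rel k kill])
  then show ?thesis unfolding t D12_tgt0 upow_int by simp
qed

lemma res_D10: assumes k: "k < length (tags n)" and t: "tags n ! k = T10 i" shows "int m1 dvd e k"
proof -
  have m: "int m1 \<noteq> 0" using m1 by simp
  have v: "1 \<le> i" "i \<le> n - 2" using tags_valid[OF nth_mem[OF k]] t by auto
  obtain k2 where k2: "k2 < length (tags n)" "tags n ! k2 = T8 i"
    using tags_mem(1)[OF v] by (metis in_set_conv_nth)
  have kk: "k \<noteq> k2" using t k2 by auto
  let ?K = "{u. inK8 (int m1) (int (m1 choose 2)) u}"
  have cg: "\<And>p x. x \<in> ?K \<Longrightarrow> umul (umul (gD10 i p) x) (uinv (gD10 i p)) \<in> ?K"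
    using conj_K8[OF m] D10_range by blast
  have cg': "\<And>p x. x \<in> ?K \<Longrightarrow> umul (umul (uinv (gD10 i p)) x) (gD10 i p) \<in> ?K"
    using conj_K8[OF m] D10_range by blast
  have rel: "\<And>u q. u \<in> RelImg (gD10 i) n m1 m2 \<Longrightarrow> ucomm u (gD10 i q) \<in> ?K"
    using D10_rel[OF m1] by blast
  have kill: "\<And>t'. t' \<in> set (tags n) \<Longrightarrow> t' \<noteq> tags n ! k \<Longrightarrow> t' \<noteq> tags n ! k2 \<Longrightarrow> eltI (gD10 i) t' \<in> ?K"
    using D10_kill[OF m1] t k2 by auto
  have "umul (eltI (gD10 i) (tags n ! k) [^]\<^bsub>UT\<^esub> e k) (eltI (gD10 i) (tags n ! k2) [^]\<^bsub>UT\<^esub> e k2) \<in> ?K \<or>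
        umul (eltI (gD10 i) (tags n ! k2) [^]\<^bsub>UT\<^esub> e k2) (eltI (gD10 i) (tags n ! k) [^]\<^bsub>UT\<^esub> e k) \<in> ?K"
    by (rule pair[OF subgroup_K8[OF m] cg cg' rel k k2(1) kk kill])
  then have A: "int m1 dvd e k - e k2"
    unfolding t k2(2) D10_tgt0 D10_tgt1 upow_int umul_simple by (auto simp: algebra_simps)
  have B: "int m1 dvd e k2" using res_D8[OF k2] d by (meson dvd_trans int_dvd_int_iff)
  show ?thesis using dvd_add[OF A B] by simp
qed

lemma res_D11: assumes k: "k < length (tags n)" and t: "tags n ! k = T11 i" shows "int (gcd m1 (m1 choose 2)) dvd e k"
proof -
  have v: "1 \<le> i" "i \<le> n - 2" using tags_valid[OF nth_mem[OF k]] t by auto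
  obtain k2 where k2: "k2 < length (tags n)" "tags n ! k2 = T9 i"
    using tags_mem(2)[OF v] by (metis in_set_conv_nth)
  have kk: "k \<noteq> k2" using t k2 by auto
  let ?K = "{u. inK9 (int m1) (int (gcd m1 (m1 choose 2))) u}"
  have cg: "\<And>p x. x \<in> ?K \<Longrightarrow> umul (umul (gD11 i p) x) (uinv (gD11 i p)) \<in> ?K"
    using conj_K9[OF gcd_facts(1)] D11_range by blast
  have cg': "\<And>p x. x \<in> ?K \<Longrightarrow> umul (umul (uinv (gD11 i p)) x) (gD11 i p) \<in> ?K"
    using conj_K9[OF gcd_facts(1)] D11_range by blast
  have rel: "\<And>u q. u \<in> RelImg (gD11 i) n m1 m2 \<Longrightarrow> ucomm u (gD11 i q) \<in> ?K"
    using D11_rel by blast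
  have kill: "\<And>t'. t' \<in> set (tags n) \<Longrightarrow> t' \<noteq> tags n ! k \<Longrightarrow> t' \<noteq> tags n ! k2 \<Longrightarrow> eltI (gD11 i) t' \<in> ?K"
    using D11_kill t k2 by auto
  have "umul (eltI (gD11 i) (tags n ! k) [^]\<^bsub>UT\<^esub> e k) (eltI (gD11 i) (tags n ! k2) [^]\<^bsub>UT\<^esub> e k2) \<in> ?K \<or>
        umul (eltI (gD11 i) (tags n ! k2) [^]\<^bsub>UT\<^esub> e k2) (eltI (gD11 i) (tags n ! k) [^]\<^bsub>UT\<^esub> e k) \<in> ?K"
    by (rule pair[OF subgroup_K9 cg cg' rel k k2(1) kk kill])
  then have A: "int (gcd m1 (m1 choose 2)) dvd e k + e k2"
    unfolding t k2(2) D11_tgt0 D11_tgt1 upow_int umul_simple by (auto simp: algebra_simps)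
  have B: "int (gcd m1 (m1 choose 2)) dvd e k2"
    using res_D9[OF k2] gcd_choose_dvd[OF d] by (meson dvd_trans int_dvd_int_iff)
  show ?thesis using dvd_diff[OF A B] by simp
qed

lemma res_D13: assumes k: "k < length (tags n)" and t: "tags n ! k = T13 i" shows "int (gcd 2 m1) dvd e k"
proof -
  have v: "1 \<le> i" "i \<le> n - 3" using tags_valid[OF nth_mem[OF k]] t by auto
  obtain k2 where k2: "k2 < length (tags n)" "tags n ! k2 = T12 i"
    using tags_mem(3)[OF v] by (metis in_set_conv_nth)
  have kk: "k \<noteq> k2" using t k2 by auto
  let ?K = "{u. inK12 (int m1) (int (gcd 2 m1)) u}"
  have cg: "\<And>p x. x \<in> ?K \<Longrightarrow> umul (umul (gD13 i p) x) (uinv (gD13 i p)) \<in> ?K"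
    using conj_K12[OF gcd2_facts] D13_range by blast
  have cg': "\<And>p x. x \<in> ?K \<Longrightarrow> umul (umul (uinv (gD13 i p)) x) (gD13 i p) \<in> ?K"
    using conj_K12[OF gcd2_facts] D13_range by blast
  have rel: "\<And>u q. u \<in> RelImg (gD13 i) n m1 m2 \<Longrightarrow> ucomm u (gD13 i q) \<in> ?K"
    using D13_rel by blast
  have kill: "\<And>t'. t' \<in> set (tags n) \<Longrightarrow> t' \<noteq> tags n ! k \<Longrightarrow> t' \<noteq> tags n ! k2 \<Longrightarrow> eltI (gD13 i) t' \<in> ?K"
    using D13_kill t k2 by auto
  have "umul (eltI (gD13 i) (tags n ! k) [^]\<^bsub>UT\<^esub> e k) (eltI (gD13 i) (tags n ! k2) [^]\<^bsub>UT\<^esub> e k2) \<in> ?K \<or>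
        umul (eltI (gD13 i) (tags n ! k2) [^]\<^bsub>UT\<^esub> e k2) (eltI (gD13 i) (tags n ! k) [^]\<^bsub>UT\<^esub> e k) \<in> ?K"
    by (rule pair[OF subgroup_K12[OF gcd2_facts] cg cg' rel k k2(1) kk kill])
  then have A: "int (gcd 2 m1) dvd e k2 - e k"
    unfolding t k2(2) D13_tgt0 D13_tgt1 upow_int umul_simple by (auto simp: algebra_simps)
  have B: "int (gcd 2 m1) dvd e k2"
    using res_D12[OF k2] gcd2_dvd[OF d] by (meson dvd_trans int_dvd_int_iff)
  show ?thesis using dvd_diff[OF B A] by simp
qed

lemma result: assumes k: "k < length (tags n)" shows "int (Nt m1 m2 (tags n ! k)) dvd e k"
proof (cases "tags n ! k")
  case (T1 i) then show ?thesis using res_D1[OF k] by simp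
next case (T2 i j) then show ?thesis using res_D2[OF k] by simp
next case (T3 i j) then show ?thesis using res_D3[OF k] by simp
next case (T4 i j) then show ?thesis using res_D4[OF k] by simp
next case (T5 i j) then show ?thesis using res_D5[OF k] by simp
next case (T6 i) then show ?thesis using res_D6[OF k] by simp
next case (T7 i) then show ?thesis using res_D7[OF k] by simp
next case (T8 i) then show ?thesis using res_D8[OF k] by simp
next case (T9 i) then show ?thesis using res_D9[OF k] by simp
next case (T10 i) then show ?thesis using res_D10[OF k] by simp
next case (T11 i) then show ?thesis using res_D11[OF k] by simp
next case (T12 i) then show ?thesis using res_D12[OF k] by simp
next case (T13 i) then show ?thesis using res_D13[OF k] by simp
qed

end

theorem mainTheorem10:
  fixes n m1 m2 :: nat
  assumes "n \<ge> 3" and "0 < m1" and "0 < m2" and "m1 dvd m2"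
  assumes "distinct ps" and "set ps = {..<length (elem_list n m1 m2)}"
  assumes "list_prod (FF n)
             (map (\<lambda>k. fst (elem_list n m1 m2 ! k) [^]\<^bsub>FF n\<^esub> (e k :: int)) ps)
           \<in> comm_subgroup (FF n) (RR n m1 m2) (carrier (FF n))"
  shows "\<forall>k < length (elem_list n m1 m2). int (snd (elem_list n m1 m2 ! k)) dvd e k"
proof -
  interpret setting n m1 m2 ps e
    using assms by unfold_locales (simp_all add: elem_list_tags)
  show ?thesis using result by (simp add: elem_list_tags)
qed


end
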